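(* Let $G$ be a discrete group acting from the left on a set $S$, and regard $\ell^1(S)$ as a Banach $\ell^1(G)$-bimodule with left action $e_g\cdot\delta_s=\delta_{g\cdot s}$ and trivial right action $\delta_s\cdot e_g=\delta_s$. Suppose every stabilizer subgroup $\mathrm{Stab}_G(s)$, $s\in S$, is amenable. Then $H^n(\ell^1(G),\ell^1(S)')=0$ for all $n\ge1$.
   Context: $\ell^1(G)$ is the convolution algebra of the discrete group $G$ with basis $(e_g)$; $H^n(A,M)$ denotes Hochschild cohomology of a Banach algebra $A$ with coefficients in a Banach $A$-bimodule $M$ (bounded $n$-linear cochains, standard coboundary), and $M'$ carries the adjoint bimodule structure. *)

theory Defs
  imports "HOL-Analysis.Analysis" "HOL-Algebra.Group_Action"
begin

definition bounded_on :: "'a set \<Rightarrow> ('a \<Rightarrow> real) \<Rightarrow> bool" where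
  "bounded_on A f \<longleftrightarrow> (\<exists>B. \<forall>x\<in>A. \<bar>f x\<bar> \<le> B)"

definition amenable_group :: "('g, 'b) monoid_scheme \<Rightarrow> bool" where
  "amenable_group G \<longleftrightarrow> (\<exists>m :: ('g \<Rightarrow> real) \<Rightarrow> real.
      (\<forall>f g. bounded_on (carrier G) f \<longrightarrow> (\<forall>x\<in>carrier G. f x = g x) \<longrightarrow> m f = m g) \<and>
      (\<forall>f g. bounded_on (carrier G) f \<longrightarrow> bounded_on (carrier G) g \<longrightarrow>
               m (\<lambda>x. f x + g x) = m f + m g) \<and>
      (\<forall>c f. bounded_on (carrier G) f \<longrightarrow> m (\<lambda>x. c * f x) = c * m f) \<and>
      (\<forall>f. bounded_on (carrier G) f \<longrightarrow> (\<forall>x\<in>carrier G. f x \<ge> 0) \<longrightarrow> m f \<ge> 0) \<and>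
      m (\<lambda>x. 1) = 1 \<and>
      (\<forall>h\<in>carrier G. \<forall>f. bounded_on (carrier G) f \<longrightarrow>
               m (\<lambda>x. f (h \<otimes>\<^bsub>G\<^esub> x)) = m f))"

definition l1 :: "'a set \<Rightarrow> ('a \<Rightarrow> complex) set" where
  "l1 I = {f. (\<forall>x. x \<notin> I \<longrightarrow> f x = 0) \<and> (\<lambda>x. norm (f x)) summable_on I}"

definition l1norm :: "'a set \<Rightarrow> ('a \<Rightarrow> complex) \<Rightarrow> real" where
  "l1norm I f = infsum (\<lambda>x. norm (f x)) I"

definition conv :: "('g, 'b) monoid_scheme \<Rightarrow> ('g \<Rightarrow> complex) \<Rightarrow> ('g \<Rightarrow> complex) \<Rightarrow> 'g \<Rightarrow> complex" where
  "conv G a b = (\<lambda>x. if x \<in> carrier G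
      then infsum (\<lambda>y. a y * b (inv\<^bsub>G\<^esub> y \<otimes>\<^bsub>G\<^esub> x)) (carrier G) else 0)"

text \<open>Left action: e_g . delta_s = delta_(g.s); right action trivial: delta_s . e_g = delta_s.\<close>
definition lact :: "('g, 'b) monoid_scheme \<Rightarrow> 's set \<Rightarrow> ('g \<Rightarrow> 's \<Rightarrow> 's)
    \<Rightarrow> ('g \<Rightarrow> complex) \<Rightarrow> ('s \<Rightarrow> complex) \<Rightarrow> 's \<Rightarrow> complex" where
  "lact G S \<phi> a \<xi> = (\<lambda>s. if s \<in> S
      then infsum (\<lambda>g. a g * \<xi> (\<phi> (inv\<^bsub>G\<^esub> g) s)) (carrier G) else 0)"

definition ract :: "('g, 'b) monoid_scheme \<Rightarrow> ('s \<Rightarrow> complex) \<Rightarrow> ('g \<Rightarrow> complex) \<Rightarrow> 's \<Rightarrow> complex" where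
  "ract G \<xi> a = (\<lambda>s. infsum a (carrier G) * \<xi> s)"

text \<open>Elements of the dual: bounded linear functionals on l1(S). Two functionals are
identified when they agree on l1(S); all equalities below are taken pointwise on l1(S).\<close>
definition dual :: "'s set \<Rightarrow> (('s \<Rightarrow> complex) \<Rightarrow> complex) set" where
  "dual S = {F. (\<forall>\<xi>\<in>l1 S. \<forall>\<eta>\<in>l1 S. F (\<lambda>s. \<xi> s + \<eta> s) = F \<xi> + F \<eta>) \<and>
                (\<forall>c. \<forall>\<xi>\<in>l1 S. F (\<lambda>s. c * \<xi> s) = c * F \<xi>) \<and>
                (\<exists>C. \<forall>\<xi>\<in>l1 S. norm (F \<xi>) \<le> C * l1norm S \<xi>)}"

definition dlact :: "('g, 'b) monoid_scheme \<Rightarrow> ('g \<Rightarrow> complex)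
    \<Rightarrow> (('s \<Rightarrow> complex) \<Rightarrow> complex) \<Rightarrow> ('s \<Rightarrow> complex) \<Rightarrow> complex" where
  "dlact G a F = (\<lambda>\<xi>. F (ract G \<xi> a))"

definition dract :: "('g, 'b) monoid_scheme \<Rightarrow> 's set \<Rightarrow> ('g \<Rightarrow> 's \<Rightarrow> 's)
    \<Rightarrow> (('s \<Rightarrow> complex) \<Rightarrow> complex) \<Rightarrow> ('g \<Rightarrow> complex) \<Rightarrow> ('s \<Rightarrow> complex) \<Rightarrow> complex" where
  "dract G S \<phi> F a = (\<lambda>\<xi>. F (lact G S \<phi> a \<xi>))"

text \<open>An n-cochain is a bounded n-linear map from l1(G)^n to l1(S)';
arguments are given as lists of length n.\<close>
definition cochain :: "('g, 'b) monoid_scheme \<Rightarrow> 's set \<Rightarrow> nat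
    \<Rightarrow> (('g \<Rightarrow> complex) list \<Rightarrow> ('s \<Rightarrow> complex) \<Rightarrow> complex) \<Rightarrow> bool" where
  "cochain G S n T \<longleftrightarrow>
     (\<forall>as. length as = n \<longrightarrow> set as \<subseteq> l1 (carrier G) \<longrightarrow> T as \<in> dual S) \<and>
     (\<forall>as i x y. length as = n \<longrightarrow> set as \<subseteq> l1 (carrier G) \<longrightarrow> i < n \<longrightarrow>
        x \<in> l1 (carrier G) \<longrightarrow> y \<in> l1 (carrier G) \<longrightarrow>
        (\<forall>\<xi>\<in>l1 S. T (as[i := (\<lambda>g. x g + y g)]) \<xi> = T (as[i := x]) \<xi> + T (as[i := y]) \<xi>)) \<and>
     (\<forall>as i c x. length as = n \<longrightarrow> set as \<subseteq> l1 (carrier G) \<longrightarrow> i < n \<longrightarrow>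
        x \<in> l1 (carrier G) \<longrightarrow>
        (\<forall>\<xi>\<in>l1 S. T (as[i := (\<lambda>g. c * x g)]) \<xi> = c * T (as[i := x]) \<xi>)) \<and>
     (\<exists>C. \<forall>as. length as = n \<longrightarrow> set as \<subseteq> l1 (carrier G) \<longrightarrow>
        (\<forall>\<xi>\<in>l1 S. norm (T as \<xi>) \<le> C * (\<Prod>a\<leftarrow>as. l1norm (carrier G) a) * l1norm S \<xi>))"

definition merge_at :: "('g, 'b) monoid_scheme \<Rightarrow> nat \<Rightarrow> ('g \<Rightarrow> complex) list \<Rightarrow> ('g \<Rightarrow> complex) list" where
  "merge_at G i as = take i as @ [conv G (as ! i) (as ! Suc i)] @ drop (Suc (Suc i)) as"

definition cobound :: "('g, 'b) monoid_scheme \<Rightarrow> 's set \<Rightarrow> ('g \<Rightarrow> 's \<Rightarrow> 's) \<Rightarrow> nat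
    \<Rightarrow> (('g \<Rightarrow> complex) list \<Rightarrow> ('s \<Rightarrow> complex) \<Rightarrow> complex)
    \<Rightarrow> ('g \<Rightarrow> complex) list \<Rightarrow> ('s \<Rightarrow> complex) \<Rightarrow> complex" where
  "cobound G S \<phi> n T as = (\<lambda>\<xi>.
      dlact G (as ! 0) (T (tl as)) \<xi>
    + (\<Sum>i<n. (-1) ^ (i + 1) * T (merge_at G i as) \<xi>)
    + (-1) ^ (n + 1) * dract G S \<phi> (T (take n as)) (as ! n) \<xi>)"

definition hochschild_vanishes :: "('g, 'b) monoid_scheme \<Rightarrow> 's set \<Rightarrow> ('g \<Rightarrow> 's \<Rightarrow> 's) \<Rightarrow> nat \<Rightarrow> bool" where
  "hochschild_vanishes G S \<phi> n \<longleftrightarrow>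
    (\<forall>T. cochain G S n T \<longrightarrow>
       (\<forall>as. length as = Suc n \<longrightarrow> set as \<subseteq> l1 (carrier G) \<longrightarrow>
          (\<forall>\<xi>\<in>l1 S. cobound G S \<phi> n T as \<xi> = 0)) \<longrightarrow>
       (\<exists>R. cochain G S (n - 1) R \<and>
          (\<forall>as. length as = n \<longrightarrow> set as \<subseteq> l1 (carrier G) \<longrightarrow>
             (\<forall>\<xi>\<in>l1 S. cobound G S \<phi> (n - 1) R as \<xi> = T as \<xi>))))"

end

theory Submission
  imports Defs
begin


definition dl :: "'x \<Rightarrow> 'x \<Rightarrow> complex" where "dl a = (\<lambda>s. if s = a then 1 else 0)"
definition restr :: "'x set \<Rightarrow> ('x \<Rightarrow> complex) \<Rightarrow> 'x \<Rightarrow> complex" where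
  "restr A \<xi> = (\<lambda>s. if s \<in> A then \<xi> s else 0)"

lemma has_sum_single:
  "((\<lambda>x. if x = a then c else 0) has_sum (if a \<in> I then c else 0)) I"
proof -
  have eq: "((\<lambda>x. if x = a then c else 0) has_sum (if a \<in> I then c else 0)) I
     \<longleftrightarrow> ((\<lambda>x. if x = a then c else 0) has_sum (if a \<in> I then c else 0)) ({a} \<inter> I)"
    by (rule has_sum_cong_neutral) auto
  have h1: "((\<lambda>x. if x = a then c else 0) has_sum (sum (\<lambda>x. if x = a then c else 0) ({a} \<inter> I))) ({a} \<inter> I)"
    by (rule has_sum_finite) auto
  have h2: "sum (\<lambda>x. if x = a then c else 0) ({a} \<inter> I) = (if a \<in> I then c else 0)"
    by (cases "a \<in> I") auto
  have h3: "((\<lambda>x. if x = a then c else 0) has_sum (if a \<in> I then c else 0)) ({a} \<inter> I)"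
    using h1 by (simp only: h2)
  show ?thesis by (rule iffD2[OF eq h3])
qed

lemma infsum_single: "infsum (\<lambda>x. if x = a then c else 0) I = (if a \<in> I then c else 0)"
  by (rule infsumI[OF has_sum_single])

lemma summable_single: "(\<lambda>x. if x = a then c else 0) summable_on I"
  unfolding summable_on_def using has_sum_single by (rule exI)

lemma l1_summable: "\<xi> \<in> l1 I \<Longrightarrow> \<xi> summable_on I"
  unfolding l1_def by (subst summable_on_iff_abs_summable_on_complex) simp

lemma l1_normsum: "\<xi> \<in> l1 I \<Longrightarrow> (\<lambda>x. norm (\<xi> x)) summable_on I"
  unfolding l1_def by blast

lemma l1_out: "\<xi> \<in> l1 I \<Longrightarrow> x \<notin> I \<Longrightarrow> \<xi> x = 0"
  unfolding l1_def by blast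

lemma l1I: "(\<And>x. x \<notin> I \<Longrightarrow> \<xi> x = 0) \<Longrightarrow> (\<lambda>x. norm (\<xi> x)) summable_on I \<Longrightarrow> \<xi> \<in> l1 I"
  unfolding l1_def by blast

lemma l1_compare:
  assumes "\<eta> \<in> l1 I" "\<And>x. x \<notin> I \<Longrightarrow> \<xi> x = 0" "\<And>x. x \<in> I \<Longrightarrow> norm (\<xi> x) \<le> B * norm (\<eta> x)"
  shows "\<xi> \<in> l1 I"
proof (rule l1I)
  show "(\<lambda>x. norm (\<xi> x)) summable_on I"
  proof (rule summable_on_comparison_test[of "\<lambda>x. B * norm (\<eta> x)"])
    show "(\<lambda>x. B * norm (\<eta> x)) summable_on I"
      by (rule summable_on_cmult_right[OF l1_normsum[OF assms(1)]])
  qed (use assms in auto)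
qed (use assms in auto)

lemma l1_add: assumes a: "\<xi> \<in> l1 I" "\<eta> \<in> l1 I" shows "(\<lambda>s. \<xi> s + \<eta> s) \<in> l1 I"
proof (rule l1I)
  show "(\<lambda>x. norm (\<xi> x + \<eta> x)) summable_on I"
  proof (rule summable_on_comparison_test[of "\<lambda>x. norm (\<xi> x) + norm (\<eta> x)"])
    show "(\<lambda>x. norm (\<xi> x) + norm (\<eta> x)) summable_on I"
      by (rule summable_on_add[OF l1_normsum[OF a(1)] l1_normsum[OF a(2)]])
  qed (simp_all add: norm_triangle_ineq)
next
  fix x assume "x \<notin> I" then show "\<xi> x + \<eta> x = 0" using l1_out[OF a(1)] l1_out[OF a(2)] by simp
qed

lemma l1_scale: assumes "\<xi> \<in> l1 I" shows "(\<lambda>s. c * \<xi> s) \<in> l1 I"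
  by (rule l1_compare[of \<xi> _ _ "norm c"]) (use assms l1_out[OF assms] in \<open>simp_all add: norm_mult\<close>)

lemma l1_zero: "(\<lambda>s. 0) \<in> l1 I"
  by (rule l1I) auto

lemma l1_restr: assumes "\<xi> \<in> l1 I" shows "restr A \<xi> \<in> l1 I"
  by (rule l1_compare[of \<xi> _ _ 1]) (use assms l1_out[OF assms] in \<open>simp_all add: restr_def\<close>)

lemma norm_dl: "(\<lambda>x. norm (dl a x)) = (\<lambda>x. if x = a then 1 else 0)"
  by (auto simp: dl_def)

lemma l1_dl: "a \<in> I \<Longrightarrow> dl a \<in> l1 I"
proof (rule l1I)
  show "(\<lambda>x. norm (dl a x)) summable_on I" unfolding norm_dl by (rule summable_single)
qed (auto simp: dl_def)

lemma l1norm_dl: "a \<in> I \<Longrightarrow> l1norm I (dl a) = 1"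
  unfolding l1norm_def norm_dl by (simp add: infsum_single)

lemma l1norm_nonneg: "0 \<le> l1norm I \<xi>"
  unfolding l1norm_def by (simp add: infsum_nonneg)

lemma l1norm_ge: "\<xi> \<in> l1 I \<Longrightarrow> t \<in> I \<Longrightarrow> norm (\<xi> t) \<le> l1norm I \<xi>"
  unfolding l1norm_def
  using finite_sum_le_infsum[of "\<lambda>x. norm (\<xi> x)" I "{t}"] l1_normsum by auto

lemma dual_bound: "F \<in> dual I \<Longrightarrow> \<exists>C\<ge>0. \<forall>\<xi>\<in>l1 I. norm (F \<xi>) \<le> C * l1norm I \<xi>"
proof -
  assume "F \<in> dual I"
  then obtain C where C: "\<forall>\<xi>\<in>l1 I. norm (F \<xi>) \<le> C * l1norm I \<xi>" unfolding dual_def by blast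
  have "\<forall>\<xi>\<in>l1 I. norm (F \<xi>) \<le> max C 0 * l1norm I \<xi>"
  proof
    fix \<xi> assume x: "\<xi> \<in> l1 I"
    have "C * l1norm I \<xi> \<le> max C 0 * l1norm I \<xi>"
      by (rule mult_right_mono) (simp_all add: l1norm_nonneg)
    then show "norm (F \<xi>) \<le> max C 0 * l1norm I \<xi>" using C x by fastforce
  qed
  then show ?thesis by (intro exI[of _ "max C 0"]) auto
qed

lemma dual_add: "F \<in> dual I \<Longrightarrow> \<xi> \<in> l1 I \<Longrightarrow> \<eta> \<in> l1 I \<Longrightarrow> F (\<lambda>s. \<xi> s + \<eta> s) = F \<xi> + F \<eta>"
  unfolding dual_def by blast

lemma dual_scale: "F \<in> dual I \<Longrightarrow> \<xi> \<in> l1 I \<Longrightarrow> F (\<lambda>s. c * \<xi> s) = c * F \<xi>"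
  unfolding dual_def by blast

lemma dual_zero: "F \<in> dual I \<Longrightarrow> F (\<lambda>s. 0) = 0"
proof -
  assume F: "F \<in> dual I"
  have "F (\<lambda>s. 0 * (0::complex)) = 0 * F (\<lambda>s. 0)" by (rule dual_scale[OF F l1_zero])
  then show ?thesis by simp
qed

lemma dual_restr_finite:
  assumes F: "F \<in> dual I" and xi: "\<xi> \<in> l1 I"
  shows "finite A \<Longrightarrow> A \<subseteq> I \<Longrightarrow> F (restr A \<xi>) = (\<Sum>t\<in>A. \<xi> t * F (dl t))"
proof (induction A rule: finite_induct)
  case empty
  have "restr {} \<xi> = (\<lambda>s. 0)" by (auto simp: restr_def)
  then show ?case using dual_zero[OF F] by simp
next
  case (insert a A)
  have e: "restr (insert a A) \<xi> = (\<lambda>s. restr A \<xi> s + \<xi> a * dl a s)"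
    using insert(2) by (auto simp: restr_def dl_def)
  have "F (restr (insert a A) \<xi>) = F (restr A \<xi>) + F (\<lambda>s. \<xi> a * dl a s)"
    unfolding e using insert l1_restr[OF xi] l1_scale[OF l1_dl] by (intro dual_add[OF F]) auto
  also have "F (\<lambda>s. \<xi> a * dl a s) = \<xi> a * F (dl a)"
    using insert l1_dl by (intro dual_scale[OF F]) auto
  finally show ?case using insert by simp
qed

lemma DL:
  assumes F: "F \<in> dual I" and xi: "\<xi> \<in> l1 I"
  shows "((\<lambda>t. \<xi> t * F (dl t)) has_sum F \<xi>) I"
proof -
  obtain C where C: "C \<ge> 0" "\<forall>\<xi>\<in>l1 I. norm (F \<xi>) \<le> C * l1norm I \<xi>"
    using dual_bound[OF F] by blast
  let ?N = "l1norm I \<xi>"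
  let ?f = "\<lambda>t. \<xi> t * F (dl t)"
  have hn: "((\<lambda>x. norm (\<xi> x)) has_sum ?N) I"
    unfolding l1norm_def using l1_normsum[OF xi] by simp
  have key: "norm (F \<xi> - sum ?f A) \<le> C * (?N - sum (\<lambda>x. norm (\<xi> x)) A)"
    if A: "finite A" "A \<subseteq> I" for A
  proof -
    have e1: "\<xi> = (\<lambda>s. restr A \<xi> s + restr (-A) \<xi> s)" by (auto simp: restr_def)
    have "F \<xi> = F (restr A \<xi>) + F (restr (-A) \<xi>)"
      by (subst e1, rule dual_add[OF F]) (auto intro: l1_restr xi)
    then have "F \<xi> - sum ?f A = F (restr (-A) \<xi>)"
      using dual_restr_finite[OF F xi A] by simp
    then have "norm (F \<xi> - sum ?f A) \<le> C * l1norm I (restr (-A) \<xi>)"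
      using C l1_restr[OF xi] by simp
    moreover have "l1norm I (restr (-A) \<xi>) = ?N - sum (\<lambda>x. norm (\<xi> x)) A"
    proof -
      have s1: "(\<lambda>x. norm (restr A \<xi> x)) summable_on I" "(\<lambda>x. norm (restr (-A) \<xi> x)) summable_on I"
        by (rule l1_normsum[OF l1_restr[OF xi]])+
      have "?N = infsum (\<lambda>x. norm (restr A \<xi> x) + norm (restr (-A) \<xi> x)) I"
        unfolding l1norm_def by (rule infsum_cong) (auto simp: restr_def)
      also have "\<dots> = infsum (\<lambda>x. norm (restr A \<xi> x)) I + l1norm I (restr (-A) \<xi>)"
        unfolding l1norm_def by (rule infsum_add[OF s1])
      also have "infsum (\<lambda>x. norm (restr A \<xi> x)) I = infsum (\<lambda>x. norm (restr A \<xi> x)) A"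
        by (rule infsum_cong_neutral) (use A in \<open>auto simp: restr_def\<close>)
      also have "\<dots> = sum (\<lambda>x. norm (\<xi> x)) A" using A by (simp add: restr_def)
      finally show ?thesis by simp
    qed
    ultimately show ?thesis by simp
  qed
  have lim: "((\<lambda>A. C * (?N - sum (\<lambda>x. norm (\<xi> x)) A)) \<longlongrightarrow> 0) (finite_subsets_at_top I)"
  proof -
    have "(sum (\<lambda>x. norm (\<xi> x)) \<longlongrightarrow> ?N) (finite_subsets_at_top I)"
      using hn unfolding has_sum_def .
    then have "((\<lambda>A. C * (?N - sum (\<lambda>x. norm (\<xi> x)) A)) \<longlongrightarrow> C * (?N - ?N)) (finite_subsets_at_top I)"
      by (intro tendsto_intros)
    then show ?thesis by simp
  qed
  have "((\<lambda>A. F \<xi> - sum ?f A) \<longlongrightarrow> 0) (finite_subsets_at_top I)"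
    by (rule Lim_null_comparison[OF _ lim]) (auto intro!: eventually_finite_subsets_at_top_weakI key)
  then have "((\<lambda>A. F \<xi> - (F \<xi> - sum ?f A)) \<longlongrightarrow> F \<xi> - 0) (finite_subsets_at_top I)"
    by (intro tendsto_intros)
  then show ?thesis unfolding has_sum_def by simp
qed

lemma DL_eq:
  assumes "F \<in> dual I" "H \<in> dual I" "\<And>t. t \<in> I \<Longrightarrow> F (dl t) = H (dl t)" "\<xi> \<in> l1 I"
  shows "F \<xi> = H \<xi>"
proof -
  have "((\<lambda>t. \<xi> t * F (dl t)) has_sum H \<xi>) I \<longleftrightarrow> ((\<lambda>t. \<xi> t * H (dl t)) has_sum H \<xi>) I"
    by (rule has_sum_cong) (simp add: assms(3))
  then have "((\<lambda>t. \<xi> t * F (dl t)) has_sum H \<xi>) I" using DL[OF assms(2,4)] by simp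
  then show ?thesis using has_sum_unique[OF DL[OF assms(1,4)]] by simp
qed

lemma dual_cong:
  assumes "F \<in> dual I" "\<And>\<xi>. \<xi> \<in> l1 I \<Longrightarrow> H \<xi> = F \<xi>"
  shows "H \<in> dual I"
proof -
  obtain C where C: "\<forall>\<xi>\<in>l1 I. norm (F \<xi>) \<le> C * l1norm I \<xi>" using dual_bound[OF assms(1)] by blast
  show ?thesis unfolding dual_def
  proof (intro CollectI conjI ballI allI exI[of _ C])
    fix \<xi> \<eta> assume a: "\<xi> \<in> l1 I" "\<eta> \<in> l1 I"
    show "H (\<lambda>s. \<xi> s + \<eta> s) = H \<xi> + H \<eta>"
      using a assms(2)[OF l1_add[OF a]] assms(2) dual_add[OF assms(1) a] by simp
  next
    fix c \<xi> assume a: "\<xi> \<in> l1 I"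
    show "H (\<lambda>s. c * \<xi> s) = c * H \<xi>"
      using a assms(2)[OF l1_scale[OF a]] assms(2) dual_scale[OF assms(1) a] by simp
  next
    fix \<xi> assume a: "\<xi> \<in> l1 I"
    show "norm (H \<xi>) \<le> C * l1norm I \<xi>" using a C assms(2) by simp
  qed
qed

lemma dualI:
  assumes "\<And>\<xi> \<eta>. \<xi> \<in> l1 I \<Longrightarrow> \<eta> \<in> l1 I \<Longrightarrow> F (\<lambda>s. \<xi> s + \<eta> s) = F \<xi> + F \<eta>"
    "\<And>c \<xi>. \<xi> \<in> l1 I \<Longrightarrow> F (\<lambda>s. c * \<xi> s) = c * F \<xi>"
    "\<And>\<xi>. \<xi> \<in> l1 I \<Longrightarrow> norm (F \<xi>) \<le> C * l1norm I \<xi>"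
  shows "F \<in> dual I"
  using assms unfolding dual_def by blast

lemma dual_cmul: "F \<in> dual I \<Longrightarrow> (\<lambda>\<xi>. c * F \<xi>) \<in> dual I"
proof -
  assume F: "F \<in> dual I"
  obtain C1 where C1: "\<forall>\<xi>\<in>l1 I. norm (F \<xi>) \<le> C1 * l1norm I \<xi>" using dual_bound[OF F] by blast
  show ?thesis
  proof (rule dualI[where C="norm c * C1"])
    fix \<xi> assume x: "\<xi> \<in> l1 I"
    show "norm (c * F \<xi>) \<le> norm c * C1 * l1norm I \<xi>"
      using C1 x by (simp add: norm_mult mult.assoc mult_left_mono)
  next
    fix \<xi> \<eta> assume x: "\<xi> \<in> l1 I" "\<eta> \<in> l1 I"
    show "c * F (\<lambda>s. \<xi> s + \<eta> s) = c * F \<xi> + c * F \<eta>"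
      unfolding dual_add[OF F x] by (simp add: distrib_left)
  next
    fix d \<xi> assume x: "\<xi> \<in> l1 I"
    show "c * F (\<lambda>s. d * \<xi> s) = d * (c * F \<xi>)"
      unfolding dual_scale[OF F x] by simp
  qed
qed

lemma dual_plus: "F \<in> dual I \<Longrightarrow> H \<in> dual I \<Longrightarrow> (\<lambda>\<xi>. F \<xi> + H \<xi>) \<in> dual I"
proof -
  assume F: "F \<in> dual I" and H: "H \<in> dual I"
  obtain C1 where C1: "\<forall>\<xi>\<in>l1 I. norm (F \<xi>) \<le> C1 * l1norm I \<xi>" using dual_bound[OF F] by blast
  obtain C2 where C2: "\<forall>\<xi>\<in>l1 I. norm (H \<xi>) \<le> C2 * l1norm I \<xi>" using dual_bound[OF H] by blast
  show ?thesis
  proof (rule dualI[where C="C1+C2"])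
    fix \<xi> assume x: "\<xi> \<in> l1 I"
    have "norm (F \<xi> + H \<xi>) \<le> norm (F \<xi>) + norm (H \<xi>)" by (rule norm_triangle_ineq)
    also have "\<dots> \<le> (C1 + C2) * l1norm I \<xi>"
    proof -
      have "norm (F \<xi>) \<le> C1 * l1norm I \<xi>" "norm (H \<xi>) \<le> C2 * l1norm I \<xi>" using C1 C2 x by auto
      then show ?thesis by (simp add: distrib_right)
    qed
    finally show "norm (F \<xi> + H \<xi>) \<le> (C1 + C2) * l1norm I \<xi>" .
  next
    fix \<xi> \<eta> assume x: "\<xi> \<in> l1 I" "\<eta> \<in> l1 I"
    show "F (\<lambda>s. \<xi> s + \<eta> s) + H (\<lambda>s. \<xi> s + \<eta> s) = F \<xi> + H \<xi> + (F \<eta> + H \<eta>)"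
      unfolding dual_add[OF F x] dual_add[OF H x] by simp
  next
    fix c \<xi> assume x: "\<xi> \<in> l1 I"
    show "F (\<lambda>s. c * \<xi> s) + H (\<lambda>s. c * \<xi> s) = c * (F \<xi> + H \<xi>)"
      unfolding dual_scale[OF F x] dual_scale[OF H x] by (simp add: distrib_left)
  qed
qed

lemma dual_sum: "finite A \<Longrightarrow> (\<And>i. i \<in> A \<Longrightarrow> F i \<in> dual I) \<Longrightarrow> (\<lambda>\<xi>. \<Sum>i\<in>A. F i \<xi>) \<in> dual I"
proof (induction A rule: finite_induct)
  case empty
  show ?case by (rule dualI[where C=0]) (simp_all add: l1norm_nonneg)
next
  case (insert a A)
  have "(\<lambda>\<xi>. F a \<xi> + (\<Sum>i\<in>A. F i \<xi>)) \<in> dual I"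
    using dual_plus[of "F a" I "\<lambda>\<xi>. \<Sum>i\<in>A. F i \<xi>"] insert.IH insert.prems by blast
  then show ?case using insert.hyps by (simp add: sum.insert)
qed

lemma infsum_sum_swap:
  fixes f :: "'i \<Rightarrow> 'a \<Rightarrow> 'b::{topological_comm_monoid_add, t2_space}"
  assumes "finite F" "\<And>i. i \<in> F \<Longrightarrow> f i summable_on A"
  shows "(\<lambda>x. \<Sum>i\<in>F. f i x) summable_on A \<and> infsum (\<lambda>x. \<Sum>i\<in>F. f i x) A = (\<Sum>i\<in>F. infsum (f i) A)"
  using assms
proof (induction F rule: finite_induct)
  case empty
  then show ?case by simp
next
  case (insert a F)
  have IH: "(\<lambda>x. \<Sum>i\<in>F. f i x) summable_on A" "infsum (\<lambda>x. \<Sum>i\<in>F. f i x) A = (\<Sum>i\<in>F. infsum (f i) A)"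
    using insert by auto
  have fa: "f a summable_on A" using insert by auto
  have e: "(\<lambda>x. \<Sum>i\<in>insert a F. f i x) = (\<lambda>x. f a x + (\<Sum>i\<in>F. f i x))"
    using insert.hyps by (simp add: sum.insert)
  show ?case unfolding e
    using summable_on_add[OF fa IH(1)] infsum_add[OF fa IH(1)] IH(2) insert.hyps by (simp add: sum.insert)
qed

lemma gen_conv:
  fixes a :: "'a \<Rightarrow> complex" and \<xi> :: "'b \<Rightarrow> complex"
  assumes a: "a \<in> l1 A" and xi: "\<xi> \<in> l1 B" and bij: "\<And>g. g \<in> A \<Longrightarrow> bij_betw (\<psi> g) B B"
  shows "\<And>s. s \<in> B \<Longrightarrow> (\<lambda>g. a g * \<xi> (\<psi> g s)) summable_on A"
    and "(\<lambda>s. if s \<in> B then infsum (\<lambda>g. a g * \<xi> (\<psi> g s)) A else 0) \<in> l1 B"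
    and "l1norm B (\<lambda>s. if s \<in> B then infsum (\<lambda>g. a g * \<xi> (\<psi> g s)) A else 0) \<le> l1norm A a * l1norm B \<xi>"
proof -
  let ?N = "l1norm B \<xi>"
  let ?Na = "l1norm A a"
  have psi: "g \<in> A \<Longrightarrow> s \<in> B \<Longrightarrow> \<psi> g s \<in> B" for g s using bij bij_betwE by blast
  have na: "(\<lambda>g. norm (a g)) summable_on A" using l1_normsum[OF a] .
  have abs1: "(\<lambda>g. norm (a g * \<xi> (\<psi> g s))) summable_on A" if s: "s \<in> B" for s
  proof (rule summable_on_comparison_test[of "\<lambda>g. norm (a g) * ?N"])
    show "(\<lambda>g. norm (a g) * ?N) summable_on A" by (rule summable_on_cmult_left[OF na])
    fix g assume g: "g \<in> A"
    show "norm (a g * \<xi> (\<psi> g s)) \<le> norm (a g) * ?N"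
      unfolding norm_mult by (rule mult_left_mono) (use l1norm_ge[OF xi psi[OF g s]] in auto)
  qed simp
  show sm: "\<And>s. s \<in> B \<Longrightarrow> (\<lambda>g. a g * \<xi> (\<psi> g s)) summable_on A"
    using abs1 summable_on_iff_abs_summable_on_complex by blast
  define L where "L = (\<lambda>s. if s \<in> B then infsum (\<lambda>g. a g * \<xi> (\<psi> g s)) A else 0)"
  have fin: "(\<Sum>s\<in>F. norm (L s)) \<le> ?Na * ?N" if F: "finite F" "F \<subseteq> B" for F
  proof -
    have absm: "(\<lambda>g. norm (a g) * norm (\<xi> (\<psi> g s))) summable_on A" if "s \<in> F" for s
    proof -
      have "(\<lambda>g. norm (a g * \<xi> (\<psi> g s))) summable_on A" using abs1 that F by auto
      then show ?thesis by (simp add: norm_mult)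
    qed
    note sw = infsum_sum_swap[OF F(1) absm]
    have "(\<Sum>s\<in>F. norm (L s)) \<le> (\<Sum>s\<in>F. infsum (\<lambda>g. norm (a g) * norm (\<xi> (\<psi> g s))) A)"
    proof (rule sum_mono)
      fix s assume s: "s \<in> F"
      then have sB: "s \<in> B" using F by auto
      have "norm (L s) = norm (infsum (\<lambda>g. a g * \<xi> (\<psi> g s)) A)" using sB by (simp add: L_def)
      also have "\<dots> \<le> infsum (\<lambda>g. norm (a g * \<xi> (\<psi> g s))) A"
        by (rule norm_infsum_bound) (rule abs1[OF sB])
      finally show "norm (L s) \<le> infsum (\<lambda>g. norm (a g) * norm (\<xi> (\<psi> g s))) A" by (simp add: norm_mult)
    qed
    also have "\<dots> = infsum (\<lambda>g. \<Sum>s\<in>F. norm (a g) * norm (\<xi> (\<psi> g s))) A"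
      using sw by simp
    also have "\<dots> \<le> infsum (\<lambda>g. norm (a g) * ?N) A"
    proof (rule infsum_mono)
      show "(\<lambda>g. \<Sum>s\<in>F. norm (a g) * norm (\<xi> (\<psi> g s))) summable_on A"
        using sw by simp
      show "(\<lambda>g. norm (a g) * ?N) summable_on A" by (rule summable_on_cmult_left[OF na])
      fix g assume g: "g \<in> A"
      have "(\<Sum>s\<in>F. norm (\<xi> (\<psi> g s))) = (\<Sum>s\<in>\<psi> g ` F. norm (\<xi> s))"
      proof -
        have "inj_on (\<psi> g) F" using bij[OF g] F unfolding bij_betw_def by (meson inj_on_subset)
        then show ?thesis by (simp add: sum.reindex)
      qed
      also have "\<dots> \<le> ?N"
        unfolding l1norm_def
        by (rule finite_sum_le_infsum) (use l1_normsum[OF xi] F psi[OF g] in auto)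
      finally have "(\<Sum>s\<in>F. norm (\<xi> (\<psi> g s))) \<le> ?N" .
      then show "(\<Sum>s\<in>F. norm (a g) * norm (\<xi> (\<psi> g s))) \<le> norm (a g) * ?N"
        by (simp add: sum_distrib_left[symmetric] mult_left_mono)
    qed
    also have "\<dots> = ?Na * ?N" unfolding l1norm_def by (rule infsum_cmult_left) (use na in auto)
    finally show ?thesis .
  qed
  have Lout: "s \<notin> B \<Longrightarrow> L s = 0" for s by (simp add: L_def)
  have Labs: "(\<lambda>s. norm (L s)) summable_on B"
  proof -
    have "bdd_above (sum (\<lambda>s. norm (L s)) ` {F. F \<subseteq> B \<and> finite F})"
      using fin by (auto intro!: bdd_aboveI[of _ "?Na * ?N"])
    then show ?thesis using abs_summable_iff_bdd_above by blast
  qed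
  show "(\<lambda>s. if s \<in> B then infsum (\<lambda>g. a g * \<xi> (\<psi> g s)) A else 0) \<in> l1 B"
    using l1I[of B L, OF Lout Labs] by (simp add: L_def)
  have "l1norm B L \<le> ?Na * ?N"
    unfolding l1norm_def[of B L] by (rule infsum_le_finite_sums[OF Labs]) (use fin in auto)
  then show "l1norm B (\<lambda>s. if s \<in> B then infsum (\<lambda>g. a g * \<xi> (\<psi> g s)) A else 0) \<le> ?Na * ?N"
    by (simp add: L_def)
qed

context group_action
begin

lemma grpG: "group G" using group_hom group_hom.axioms(1) by auto

lemma act_closed: "g \<in> carrier G \<Longrightarrow> s \<in> E \<Longrightarrow> \<phi> g s \<in> E"
  using element_image by simp

lemma act_inv: "g \<in> carrier G \<Longrightarrow> s \<in> E \<Longrightarrow> \<phi> (inv g) (\<phi> g s) = s"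
  using orbit_sym_aux by simp

lemma act_inv2: "g \<in> carrier G \<Longrightarrow> s \<in> E \<Longrightarrow> \<phi> g (\<phi> (inv g) s) = s"
proof -
  assume g: "g \<in> carrier G" and s: "s \<in> E"
  interpret group G by (rule grpG)
  have "\<phi> (inv (inv g)) (\<phi> (inv g) s) = s" using act_inv[of "inv g" s] g s by simp
  then show ?thesis using g by simp
qed

lemma act_comp: "g \<in> carrier G \<Longrightarrow> h \<in> carrier G \<Longrightarrow> s \<in> E \<Longrightarrow> \<phi> (g \<otimes> h) s = \<phi> g (\<phi> h s)"
  using composition_rule by simp

lemma act_bij: "g \<in> carrier G \<Longrightarrow> bij_betw (\<phi> g) E E"
  using bij_prop0 unfolding Bij_def by simp

lemma rmul_bij: "x \<in> carrier G \<Longrightarrow> bij_betw (\<lambda>y. y \<otimes> inv x) (carrier G) (carrier G)"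
proof -
  assume x: "x \<in> carrier G"
  interpret group G by (rule grpG)
  show ?thesis
    by (rule bij_betw_byWitness[where f'="\<lambda>y. y \<otimes> x"]) (use x in \<open>auto simp: m_assoc\<close>)
qed

lemma lmul_bij: "y \<in> carrier G \<Longrightarrow> bij_betw (\<lambda>x. inv y \<otimes> x) (carrier G) (carrier G)"
proof -
  assume y: "y \<in> carrier G"
  interpret group G by (rule grpG)
  show ?thesis
    by (rule bij_betw_byWitness[where f'="\<lambda>x. y \<otimes> x"]) (use y in \<open>auto simp: m_assoc[symmetric]\<close>)
qed

lemma conv_dl: "x \<in> carrier G \<Longrightarrow> conv G a (dl x) = (\<lambda>y. if y \<in> carrier G then a (y \<otimes> inv x) else 0)"
proof
  fix y assume x: "x \<in> carrier G"
  interpret group G by (rule grpG)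
  show "conv G a (dl x) y = (if y \<in> carrier G then a (y \<otimes> inv x) else 0)"
  proof (cases "y \<in> carrier G")
    case True
    have "conv G a (dl x) y = infsum (\<lambda>z. a z * dl x (inv z \<otimes> y)) (carrier G)"
      using True by (simp add: conv_def)
    also have "\<dots> = infsum (\<lambda>z. if z = y \<otimes> inv x then a (y \<otimes> inv x) else 0) (carrier G)"
    proof (rule infsum_cong)
      fix z assume z: "z \<in> carrier G"
      have "(inv z \<otimes> y = x) \<longleftrightarrow> (y = z \<otimes> x)" using inv_solve_left' x z True by simp
      moreover have "(z = y \<otimes> inv x) \<longleftrightarrow> (y = z \<otimes> x)" using inv_solve_right x z True by simp
      ultimately show "a z * dl x (inv z \<otimes> y) = (if z = y \<otimes> inv x then a (y \<otimes> inv x) else 0)"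
        by (auto simp: dl_def)
    qed
    also have "\<dots> = a (y \<otimes> inv x)" using True x by (simp add: infsum_single)
    finally show ?thesis using True by simp
  qed (simp add: conv_def)
qed

lemma conv_dl_l1:
  assumes a: "a \<in> l1 (carrier G)" and x: "x \<in> carrier G"
  shows "conv G a (dl x) \<in> l1 (carrier G)" "l1norm (carrier G) (conv G a (dl x)) = l1norm (carrier G) a"
proof -
  interpret group G by (rule grpG)
  have e: "\<And>y. y \<in> carrier G \<Longrightarrow> norm (conv G a (dl x) y) = norm (a (y \<otimes> inv x))"
    using x by (simp add: conv_dl)
  have "(\<lambda>y. norm (a (y \<otimes> inv x))) summable_on carrier G"
    using summable_on_reindex_bij_betw[OF rmul_bij[OF x], of "\<lambda>z. norm (a z)"] l1_normsum[OF a] by simp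
  then have s: "(\<lambda>y. norm (conv G a (dl x) y)) summable_on carrier G"
    using summable_on_cong[of "carrier G" "\<lambda>y. norm (conv G a (dl x) y)" "\<lambda>y. norm (a (y \<otimes> inv x))"] e by simp
  show "conv G a (dl x) \<in> l1 (carrier G)"
    by (rule l1I[OF _ s]) (simp add: conv_def)
  have "l1norm (carrier G) (conv G a (dl x)) = infsum (\<lambda>y. norm (a (y \<otimes> inv x))) (carrier G)"
    unfolding l1norm_def by (rule infsum_cong) (rule e)
  also have "\<dots> = l1norm (carrier G) a"
    unfolding l1norm_def by (rule infsum_reindex_bij_betw[OF rmul_bij[OF x], of "\<lambda>z. norm (a z)"])
  finally show "l1norm (carrier G) (conv G a (dl x)) = l1norm (carrier G) a" .
qed

lemma conv_dl_dl: "g \<in> carrier G \<Longrightarrow> x \<in> carrier G \<Longrightarrow> conv G (dl g) (dl x) = dl (g \<otimes> x)"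
proof -
  assume g: "g \<in> carrier G" and x: "x \<in> carrier G"
  interpret group G by (rule grpG)
  show ?thesis
  proof
    fix y
    show "conv G (dl g) (dl x) y = dl (g \<otimes> x) y"
    proof (cases "y \<in> carrier G")
      case True
      have "(y \<otimes> inv x = g) \<longleftrightarrow> (y = g \<otimes> x)" using inv_solve_right' True g x by simp
      then show ?thesis unfolding conv_dl[OF x] using True by (simp add: dl_def)
    next
      case False
      then have "y \<noteq> g \<otimes> x" using g x by auto
      then show ?thesis unfolding conv_dl[OF x] using False by (simp add: dl_def)
    qed
  qed
qed

lemma lact_dl_dl: "g \<in> carrier G \<Longrightarrow> u \<in> E \<Longrightarrow> lact G E \<phi> (dl g) (dl u) = dl (\<phi> g u)"
proof
  fix s assume g: "g \<in> carrier G" and u: "u \<in> E"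
  interpret group G by (rule grpG)
  show "lact G E \<phi> (dl g) (dl u) s = dl (\<phi> g u) s"
  proof (cases "s \<in> E")
    case True
    have "lact G E \<phi> (dl g) (dl u) s = infsum (\<lambda>h. dl g h * dl u (\<phi> (inv h) s)) (carrier G)"
      using True by (simp add: lact_def)
    also have "\<dots> = infsum (\<lambda>h. if h = g then dl u (\<phi> (inv g) s) else 0) (carrier G)"
      by (rule infsum_cong) (simp add: dl_def)
    also have "\<dots> = dl u (\<phi> (inv g) s)" using g by (simp add: infsum_single)
    also have "\<dots> = dl (\<phi> g u) s"
    proof -
      have "(\<phi> (inv g) s = u) \<longleftrightarrow> (s = \<phi> g u)"
        using act_inv act_inv2 g u True by auto
      then show ?thesis by (simp add: dl_def)
    qed
    finally show ?thesis .
  next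
    case False
    then have "s \<noteq> \<phi> g u" using act_closed g u by auto
    then show ?thesis using False by (simp add: lact_def dl_def)
  qed
qed

lemma lact_eq: "lact G E \<phi> a \<xi> = (\<lambda>s. if s \<in> E then infsum (\<lambda>g. a g * \<xi> (\<phi> (inv g) s)) (carrier G) else 0)"
  by (simp add: lact_def)

lemma lact_l1:
  assumes a: "a \<in> l1 (carrier G)" and xi: "\<xi> \<in> l1 E"
  shows "\<And>s. s \<in> E \<Longrightarrow> (\<lambda>g. a g * \<xi> (\<phi> (inv g) s)) summable_on carrier G"
    and "lact G E \<phi> a \<xi> \<in> l1 E"
    and "l1norm E (lact G E \<phi> a \<xi>) \<le> l1norm (carrier G) a * l1norm E \<xi>"
proof -
  interpret group G by (rule grpG)
  have bij: "\<And>g. g \<in> carrier G \<Longrightarrow> bij_betw (\<phi> (inv g)) E E" using act_bij by simp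
  note gc = gen_conv[OF a xi bij]
  show "\<And>s. s \<in> E \<Longrightarrow> (\<lambda>g. a g * \<xi> (\<phi> (inv g) s)) summable_on carrier G" by (rule gc(1))
  show "lact G E \<phi> a \<xi> \<in> l1 E" unfolding lact_eq by (rule gc(2))
  show "l1norm E (lact G E \<phi> a \<xi>) \<le> l1norm (carrier G) a * l1norm E \<xi>" unfolding lact_eq by (rule gc(3))
qed

lemma conv_l1:
  assumes a: "a \<in> l1 (carrier G)" and b: "b \<in> l1 (carrier G)"
  shows "conv G a b \<in> l1 (carrier G)"
proof -
  interpret group G by (rule grpG)
  have bij: "\<And>y. y \<in> carrier G \<Longrightarrow> bij_betw (\<lambda>x. inv y \<otimes> x) (carrier G) (carrier G)"
    by (rule lmul_bij)
  have e: "conv G a b = (\<lambda>x. if x \<in> carrier G then infsum (\<lambda>y. a y * b (inv y \<otimes> x)) (carrier G) else 0)"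
    by (simp add: conv_def)
  show ?thesis unfolding e by (rule gen_conv(2)[OF a b bij])
qed

lemma lact_add_xi:
  assumes a: "a \<in> l1 (carrier G)" and xi: "\<xi> \<in> l1 E" and eta: "\<eta> \<in> l1 E"
  shows "lact G E \<phi> a (\<lambda>s. \<xi> s + \<eta> s) = (\<lambda>s. lact G E \<phi> a \<xi> s + lact G E \<phi> a \<eta> s)"
proof
  fix s show "lact G E \<phi> a (\<lambda>s. \<xi> s + \<eta> s) s = lact G E \<phi> a \<xi> s + lact G E \<phi> a \<eta> s"
  proof (cases "s \<in> E")
    case True
    have "infsum (\<lambda>g. a g * (\<xi> (\<phi> (inv g) s) + \<eta> (\<phi> (inv g) s))) (carrier G)
       = infsum (\<lambda>g. a g * \<xi> (\<phi> (inv g) s) + a g * \<eta> (\<phi> (inv g) s)) (carrier G)"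
      by (simp add: distrib_left)
    also have "\<dots> = infsum (\<lambda>g. a g * \<xi> (\<phi> (inv g) s)) (carrier G) + infsum (\<lambda>g. a g * \<eta> (\<phi> (inv g) s)) (carrier G)"
      by (rule infsum_add[OF lact_l1(1)[OF a xi True] lact_l1(1)[OF a eta True]])
    finally show ?thesis using True by (simp add: lact_def)
  qed (simp add: lact_def)
qed

lemma lact_scale_xi:
  assumes a: "a \<in> l1 (carrier G)" and xi: "\<xi> \<in> l1 E"
  shows "lact G E \<phi> a (\<lambda>s. c * \<xi> s) = (\<lambda>s. c * lact G E \<phi> a \<xi> s)"
proof
  fix s show "lact G E \<phi> a (\<lambda>s. c * \<xi> s) s = c * lact G E \<phi> a \<xi> s"
  proof (cases "s \<in> E")
    case True
    have "infsum (\<lambda>g. a g * (c * \<xi> (\<phi> (inv g) s))) (carrier G)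
       = infsum (\<lambda>g. c * (a g * \<xi> (\<phi> (inv g) s))) (carrier G)"
      by (simp add: mult.left_commute)
    also have "\<dots> = c * infsum (\<lambda>g. a g * \<xi> (\<phi> (inv g) s)) (carrier G)"
      by (rule infsum_cmult_right) (rule lact_l1(1)[OF a xi True])
    finally show ?thesis using True by (simp add: lact_def)
  qed (simp add: lact_def)
qed

lemma lact_add_a:
  assumes a: "a \<in> l1 (carrier G)" and b: "b \<in> l1 (carrier G)" and xi: "\<xi> \<in> l1 E"
  shows "lact G E \<phi> (\<lambda>g. a g + b g) \<xi> = (\<lambda>s. lact G E \<phi> a \<xi> s + lact G E \<phi> b \<xi> s)"
proof
  fix s show "lact G E \<phi> (\<lambda>g. a g + b g) \<xi> s = lact G E \<phi> a \<xi> s + lact G E \<phi> b \<xi> s"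
  proof (cases "s \<in> E")
    case True
    have "infsum (\<lambda>g. (a g + b g) * \<xi> (\<phi> (inv g) s)) (carrier G)
       = infsum (\<lambda>g. a g * \<xi> (\<phi> (inv g) s) + b g * \<xi> (\<phi> (inv g) s)) (carrier G)"
      by (simp add: distrib_right)
    also have "\<dots> = infsum (\<lambda>g. a g * \<xi> (\<phi> (inv g) s)) (carrier G) + infsum (\<lambda>g. b g * \<xi> (\<phi> (inv g) s)) (carrier G)"
      by (rule infsum_add[OF lact_l1(1)[OF a xi True] lact_l1(1)[OF b xi True]])
    finally show ?thesis using True by (simp add: lact_def)
  qed (simp add: lact_def)
qed

lemma lact_scale_a:
  assumes a: "a \<in> l1 (carrier G)" and xi: "\<xi> \<in> l1 E"
  shows "lact G E \<phi> (\<lambda>g. c * a g) \<xi> = (\<lambda>s. c * lact G E \<phi> a \<xi> s)"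
proof
  fix s show "lact G E \<phi> (\<lambda>g. c * a g) \<xi> s = c * lact G E \<phi> a \<xi> s"
  proof (cases "s \<in> E")
    case True
    have "infsum (\<lambda>g. (c * a g) * \<xi> (\<phi> (inv g) s)) (carrier G)
       = infsum (\<lambda>g. c * (a g * \<xi> (\<phi> (inv g) s))) (carrier G)"
      by (simp add: mult.assoc)
    also have "\<dots> = c * infsum (\<lambda>g. a g * \<xi> (\<phi> (inv g) s)) (carrier G)"
      by (rule infsum_cmult_right) (rule lact_l1(1)[OF a xi True])
    finally show ?thesis using True by (simp add: lact_def)
  qed (simp add: lact_def)
qed

lemma dual_lact_xi:
  assumes F: "F \<in> dual E" and a: "a \<in> l1 (carrier G)"
  shows "(\<lambda>\<xi>. F (lact G E \<phi> a \<xi>)) \<in> dual E"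
proof -
  obtain C where C: "C \<ge> 0" "\<forall>\<xi>\<in>l1 E. norm (F \<xi>) \<le> C * l1norm E \<xi>" using dual_bound[OF F] by blast
  show ?thesis
  proof (rule dualI[where C="C * l1norm (carrier G) a"])
    fix \<xi> \<eta> assume x: "\<xi> \<in> l1 E" "\<eta> \<in> l1 E"
    show "F (lact G E \<phi> a (\<lambda>s. \<xi> s + \<eta> s)) = F (lact G E \<phi> a \<xi>) + F (lact G E \<phi> a \<eta>)"
      unfolding lact_add_xi[OF a x] by (rule dual_add[OF F lact_l1(2)[OF a x(1)] lact_l1(2)[OF a x(2)]])
  next
    fix c \<xi> assume x: "\<xi> \<in> l1 E"
    show "F (lact G E \<phi> a (\<lambda>s. c * \<xi> s)) = c * F (lact G E \<phi> a \<xi>)"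
      unfolding lact_scale_xi[OF a x] by (rule dual_scale[OF F lact_l1(2)[OF a x]])
  next
    fix \<xi> assume x: "\<xi> \<in> l1 E"
    have "norm (F (lact G E \<phi> a \<xi>)) \<le> C * l1norm E (lact G E \<phi> a \<xi>)"
      using C(2) lact_l1(2)[OF a x] by simp
    also have "\<dots> \<le> C * (l1norm (carrier G) a * l1norm E \<xi>)"
      by (rule mult_left_mono[OF lact_l1(3)[OF a x] C(1)])
    finally show "norm (F (lact G E \<phi> a \<xi>)) \<le> C * l1norm (carrier G) a * l1norm E \<xi>"
      by (simp add: mult.assoc)
  qed
qed

lemma dual_lact_a:
  assumes F: "F \<in> dual E" and xi: "\<xi> \<in> l1 E"
  shows "(\<lambda>a. F (lact G E \<phi> a \<xi>)) \<in> dual (carrier G)"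
proof -
  obtain C where C: "C \<ge> 0" "\<forall>\<xi>\<in>l1 E. norm (F \<xi>) \<le> C * l1norm E \<xi>" using dual_bound[OF F] by blast
  show ?thesis
  proof (rule dualI[where C="C * l1norm E \<xi>"])
    fix a b assume x: "a \<in> l1 (carrier G)" "b \<in> l1 (carrier G)"
    show "F (lact G E \<phi> (\<lambda>s. a s + b s) \<xi>) = F (lact G E \<phi> a \<xi>) + F (lact G E \<phi> b \<xi>)"
      unfolding lact_add_a[OF x xi] by (rule dual_add[OF F lact_l1(2)[OF x(1) xi] lact_l1(2)[OF x(2) xi]])
  next
    fix c a assume x: "a \<in> l1 (carrier G)"
    show "F (lact G E \<phi> (\<lambda>s. c * a s) \<xi>) = c * F (lact G E \<phi> a \<xi>)"
      unfolding lact_scale_a[OF x xi] by (rule dual_scale[OF F lact_l1(2)[OF x xi]])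
  next
    fix a assume x: "a \<in> l1 (carrier G)"
    have "norm (F (lact G E \<phi> a \<xi>)) \<le> C * l1norm E (lact G E \<phi> a \<xi>)"
      using C(2) lact_l1(2)[OF x xi] by simp
    also have "\<dots> \<le> C * (l1norm (carrier G) a * l1norm E \<xi>)"
      by (rule mult_left_mono[OF lact_l1(3)[OF x xi] C(1)])
    finally show "norm (F (lact G E \<phi> a \<xi>)) \<le> C * l1norm E \<xi> * l1norm (carrier G) a"
      by (simp add: mult_ac)
  qed
qed

end

definition cmean :: "(('g \<Rightarrow> real) \<Rightarrow> real) \<Rightarrow> ('g \<Rightarrow> complex) \<Rightarrow> complex" where
  "cmean m f = complex_of_real (m (\<lambda>x. Re (f x))) + \<i> * complex_of_real (m (\<lambda>x. Im (f x)))"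

definition cbdd :: "'g set \<Rightarrow> ('g \<Rightarrow> complex) \<Rightarrow> bool" where
  "cbdd K f \<longleftrightarrow> (\<exists>B. \<forall>x\<in>K. norm (f x) \<le> B)"

definition rmean :: "'g set \<Rightarrow> (('g \<Rightarrow> real) \<Rightarrow> real) \<Rightarrow> bool" where
  "rmean K m \<longleftrightarrow> (\<forall>f g. bounded_on K f \<longrightarrow> (\<forall>x\<in>K. f x = g x) \<longrightarrow> m f = m g) \<and>
      (\<forall>f g. bounded_on K f \<longrightarrow> bounded_on K g \<longrightarrow> m (\<lambda>x. f x + g x) = m f + m g) \<and>
      (\<forall>c f. bounded_on K f \<longrightarrow> m (\<lambda>x. c * f x) = c * m f) \<and>
      (\<forall>f. bounded_on K f \<longrightarrow> (\<forall>x\<in>K. f x \<ge> 0) \<longrightarrow> m f \<ge> 0) \<and>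
      m (\<lambda>x. 1) = 1"

lemma bdd_Re: "cbdd K f \<Longrightarrow> bounded_on K (\<lambda>x. Re (f x))"
  unfolding cbdd_def bounded_on_def using abs_Re_le_cmod order_trans by blast

lemma bdd_Im: "cbdd K f \<Longrightarrow> bounded_on K (\<lambda>x. Im (f x))"
  unfolding cbdd_def bounded_on_def using abs_Im_le_cmod order_trans by blast

lemma bdd_add: "bounded_on K f \<Longrightarrow> bounded_on K g \<Longrightarrow> bounded_on K (\<lambda>x. f x + g x)"
proof -
  assume "bounded_on K f" "bounded_on K g"
  then obtain B1 B2 where "\<forall>x\<in>K. \<bar>f x\<bar> \<le> B1" "\<forall>x\<in>K. \<bar>g x\<bar> \<le> B2" unfolding bounded_on_def by blast
  then have "\<forall>x\<in>K. \<bar>f x + g x\<bar> \<le> B1 + B2" by (auto intro: order_trans[OF abs_triangle_ineq] add_mono)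
  then show ?thesis unfolding bounded_on_def by blast
qed

lemma bdd_scale: "bounded_on K f \<Longrightarrow> bounded_on K (\<lambda>x. c * f x)"
proof -
  assume "bounded_on K f"
  then obtain B where B: "\<forall>x\<in>K. \<bar>f x\<bar> \<le> B" unfolding bounded_on_def by blast
  have "\<forall>x\<in>K. \<bar>c * f x\<bar> \<le> \<bar>c\<bar> * B" using B by (simp add: abs_mult mult_left_mono)
  then show ?thesis unfolding bounded_on_def by blast
qed

lemma bdd_const: "bounded_on K (\<lambda>x. c)"
  unfolding bounded_on_def by blast

lemma cbdd_bound: "(\<And>x. x \<in> K \<Longrightarrow> norm (f x) \<le> B) \<Longrightarrow> cbdd K f"
  unfolding cbdd_def by blast

lemma cbdd_add: "cbdd K f \<Longrightarrow> cbdd K g \<Longrightarrow> cbdd K (\<lambda>x. f x + g x)"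
proof -
  assume "cbdd K f" "cbdd K g"
  then obtain B1 B2 where "\<forall>x\<in>K. norm (f x) \<le> B1" "\<forall>x\<in>K. norm (g x) \<le> B2" unfolding cbdd_def by blast
  then have "\<forall>x\<in>K. norm (f x + g x) \<le> B1 + B2" by (auto intro: order_trans[OF norm_triangle_ineq] add_mono)
  then show ?thesis unfolding cbdd_def by blast
qed

lemma cbdd_scale: "cbdd K f \<Longrightarrow> cbdd K (\<lambda>x. c * f x)"
proof -
  assume "cbdd K f"
  then obtain B where B: "\<forall>x\<in>K. norm (f x) \<le> B" unfolding cbdd_def by blast
  have "\<forall>x\<in>K. norm (c * f x) \<le> norm c * B" using B by (simp add: norm_mult mult_left_mono)
  then show ?thesis unfolding cbdd_def by blast
qed

lemma cbdd_sum: "finite A \<Longrightarrow> (\<And>i. i \<in> A \<Longrightarrow> cbdd K (f i)) \<Longrightarrow> cbdd K (\<lambda>x. \<Sum>i\<in>A. f i x)"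
proof (induction A rule: finite_induct)
  case empty
  have "cbdd K (\<lambda>x. 0::complex)" by (rule cbdd_bound[of _ _ 0]) simp
  then show ?case by simp
next
  case (insert a A)
  have "cbdd K (\<lambda>x. f a x + (\<Sum>i\<in>A. f i x))" using insert by (intro cbdd_add) auto
  then show ?case using insert.hyps by (simp add: sum.insert)
qed

lemma cbdd_mono: "cbdd K f \<Longrightarrow> L \<subseteq> K \<Longrightarrow> cbdd L f"
  unfolding cbdd_def by blast

context
  fixes K and m :: "('g \<Rightarrow> real) \<Rightarrow> real"
  assumes rm: "rmean K m"
begin

lemma m_cong: "bounded_on K f \<Longrightarrow> (\<And>x. x \<in> K \<Longrightarrow> f x = g x) \<Longrightarrow> m f = m g"
  using rm unfolding rmean_def by blast

lemma m_add: "bounded_on K f \<Longrightarrow> bounded_on K g \<Longrightarrow> m (\<lambda>x. f x + g x) = m f + m g"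
  using rm unfolding rmean_def by blast

lemma m_scale: "bounded_on K f \<Longrightarrow> m (\<lambda>x. c * f x) = c * m f"
  using rm unfolding rmean_def by blast

lemma m_pos: "bounded_on K f \<Longrightarrow> (\<And>x. x \<in> K \<Longrightarrow> f x \<ge> 0) \<Longrightarrow> m f \<ge> 0"
  using rm unfolding rmean_def by blast

lemma m_one: "m (\<lambda>x. 1) = 1"
  using rm unfolding rmean_def by blast

lemma m_const: "m (\<lambda>x. c) = c"
proof -
  have "m (\<lambda>x. c * 1) = c * m (\<lambda>x. 1)" by (rule m_scale) (rule bdd_const)
  then show ?thesis using m_one by simp
qed

lemma m_bound:
  assumes B: "\<And>x. x \<in> K \<Longrightarrow> \<bar>u x\<bar> \<le> B"
  shows "\<bar>m u\<bar> \<le> B"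
proof -
  have bu: "bounded_on K u" unfolding bounded_on_def using B by blast
  have bmu: "bounded_on K (\<lambda>x. (-1) * u x)" by (rule bdd_scale[OF bu])
  have e1: "m (\<lambda>x. (\<lambda>x. B) x + (\<lambda>x. (-1) * u x) x) = m (\<lambda>x. B) + m (\<lambda>x. (-1) * u x)"
    by (rule m_add[OF bdd_const bmu])
  have e2: "m (\<lambda>x. (-1) * u x) = (-1) * m u" by (rule m_scale[OF bu])
  have p1: "m (\<lambda>x. B + (-1) * u x) \<ge> 0"
    by (rule m_pos[OF bdd_add[OF bdd_const bmu]]) (use B in force)
  have e3: "m (\<lambda>x. (\<lambda>x. B) x + u x) = m (\<lambda>x. B) + m u"
    by (rule m_add[OF bdd_const bu])
  have p2: "m (\<lambda>x. B + u x) \<ge> 0"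
    by (rule m_pos[OF bdd_add[OF bdd_const bu]]) (use B in force)
  show ?thesis using e1 e2 e3 p1 p2 m_const[of B] by simp
qed

lemma cmean_cong: "cbdd K f \<Longrightarrow> (\<And>x. x \<in> K \<Longrightarrow> f x = g x) \<Longrightarrow> cmean m f = cmean m g"
proof -
  assume f: "cbdd K f" and e: "\<And>x. x \<in> K \<Longrightarrow> f x = g x"
  have "m (\<lambda>x. Re (f x)) = m (\<lambda>x. Re (g x))" by (rule m_cong[OF bdd_Re[OF f]]) (simp add: e)
  moreover have "m (\<lambda>x. Im (f x)) = m (\<lambda>x. Im (g x))" by (rule m_cong[OF bdd_Im[OF f]]) (simp add: e)
  ultimately show ?thesis unfolding cmean_def by simp
qed

lemma cmean_add: "cbdd K f \<Longrightarrow> cbdd K g \<Longrightarrow> cmean m (\<lambda>x. f x + g x) = cmean m f + cmean m g"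
proof -
  assume f: "cbdd K f" and g: "cbdd K g"
  have "m (\<lambda>x. Re (f x + g x)) = m (\<lambda>x. Re (f x)) + m (\<lambda>x. Re (g x))"
    using m_add[OF bdd_Re[OF f] bdd_Re[OF g]] by simp
  moreover have "m (\<lambda>x. Im (f x + g x)) = m (\<lambda>x. Im (f x)) + m (\<lambda>x. Im (g x))"
    using m_add[OF bdd_Im[OF f] bdd_Im[OF g]] by simp
  ultimately show ?thesis unfolding cmean_def by (simp add: algebra_simps)
qed

lemma cmean_scale: "cbdd K f \<Longrightarrow> cmean m (\<lambda>x. c * f x) = c * cmean m f"
proof -
  assume f: "cbdd K f"
  have bR: "bounded_on K (\<lambda>x. Re (f x))" by (rule bdd_Re[OF f])
  have bI: "bounded_on K (\<lambda>x. Im (f x))" by (rule bdd_Im[OF f])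
  have "m (\<lambda>x. Re (c * f x)) = m (\<lambda>x. (\<lambda>x. Re c * Re (f x)) x + (\<lambda>x. (- Im c) * Im (f x)) x)"
    by simp
  also have "\<dots> = m (\<lambda>x. Re c * Re (f x)) + m (\<lambda>x. (- Im c) * Im (f x))"
    by (rule m_add[OF bdd_scale[OF bR] bdd_scale[OF bI]])
  also have "\<dots> = Re c * m (\<lambda>x. Re (f x)) + (- Im c) * m (\<lambda>x. Im (f x))"
    by (simp only: m_scale[OF bR] m_scale[OF bI])
  finally have r: "m (\<lambda>x. Re (c * f x)) = Re c * m (\<lambda>x. Re (f x)) - Im c * m (\<lambda>x. Im (f x))" by simp
  have "m (\<lambda>x. Im (c * f x)) = m (\<lambda>x. (\<lambda>x. Re c * Im (f x)) x + (\<lambda>x. Im c * Re (f x)) x)"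
    by simp
  also have "\<dots> = m (\<lambda>x. Re c * Im (f x)) + m (\<lambda>x. Im c * Re (f x))"
    by (rule m_add[OF bdd_scale[OF bI] bdd_scale[OF bR]])
  also have "\<dots> = Re c * m (\<lambda>x. Im (f x)) + Im c * m (\<lambda>x. Re (f x))"
    by (simp only: m_scale[OF bR] m_scale[OF bI])
  finally have i: "m (\<lambda>x. Im (c * f x)) = Re c * m (\<lambda>x. Im (f x)) + Im c * m (\<lambda>x. Re (f x))" .
  show ?thesis unfolding cmean_def r i by (simp add: complex_eq_iff algebra_simps)
qed

lemma cmean_const: "cmean m (\<lambda>x. c) = c"
  unfolding cmean_def m_const by (simp add: complex_eq_iff)

lemma cmean_bound:
  assumes B: "\<And>x. x \<in> K \<Longrightarrow> norm (f x) \<le> B"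
  shows "norm (cmean m f) \<le> 2 * B"
proof -
  have r: "\<bar>m (\<lambda>x. Re (f x))\<bar> \<le> B"
    by (rule m_bound) (use B abs_Re_le_cmod order_trans in blast)
  have i: "\<bar>m (\<lambda>x. Im (f x))\<bar> \<le> B"
    by (rule m_bound) (use B abs_Im_le_cmod order_trans in blast)
  have "norm (cmean m f) \<le> \<bar>Re (cmean m f)\<bar> + \<bar>Im (cmean m f)\<bar>" by (rule cmod_le)
  also have "\<dots> = \<bar>m (\<lambda>x. Re (f x))\<bar> + \<bar>m (\<lambda>x. Im (f x))\<bar>" by (simp add: cmean_def)
  finally show ?thesis using r i by simp
qed

lemma cmean_inv:
  assumes inv: "\<forall>f. bounded_on K f \<longrightarrow> m (\<lambda>x. f (mul x)) = m f" and f: "cbdd K f"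
  shows "cmean m (\<lambda>x. f (mul x)) = cmean m f"
proof -
  have "m (\<lambda>x. (\<lambda>x. Re (f x)) (mul x)) = m (\<lambda>x. Re (f x))" using inv bdd_Re[OF f] by blast
  moreover have "m (\<lambda>x. (\<lambda>x. Im (f x)) (mul x)) = m (\<lambda>x. Im (f x))" using inv bdd_Im[OF f] by blast
  ultimately show ?thesis unfolding cmean_def by simp
qed

end

locale amen_action = group_action G E \<phi> for G (structure) and E and \<phi> +
  assumes amen: "\<forall>s\<in>E. amenable_group (G\<lparr>carrier := stabilizer G \<phi> s\<rparr>)"
begin

definition goodm where "goodm u m \<longleftrightarrow> rmean (stabilizer G \<phi> u) m \<and>
   (\<forall>h\<in>stabilizer G \<phi> u. \<forall>f. bounded_on (stabilizer G \<phi> u) f \<longrightarrow> m (\<lambda>x. f (h \<otimes> x)) = m f)"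
definition mm where "mm u = (SOME m. goodm u m)"
definition rho where "rho t = (SOME u. u \<in> orbit G \<phi> t)"
definition gam where "gam t = (SOME g. g \<in> carrier G \<and> \<phi> g (rho t) = t)"
definition M where "M t \<Phi> = cmean (mm (rho t)) (\<lambda>h. \<Phi> (gam t \<otimes> h))"

lemma goodm_mm: "u \<in> E \<Longrightarrow> goodm u (mm u)"
proof -
  assume u: "u \<in> E"
  have "amenable_group (G\<lparr>carrier := stabilizer G \<phi> u\<rparr>)" using amen u by blast
  then have "\<exists>m. goodm u m" unfolding amenable_group_def goodm_def rmean_def by simp
  then show ?thesis unfolding mm_def by (rule someI_ex)
qed

lemma orbit_mem: "t \<in> E \<Longrightarrow> u \<in> orbit G \<phi> t \<Longrightarrow> \<exists>g\<in>carrier G. u = \<phi> g t"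
  unfolding orbit_def by blast

lemma rho_prop: "t \<in> E \<Longrightarrow> rho t \<in> orbit G \<phi> t \<and> rho t \<in> E"
proof -
  assume t: "t \<in> E"
  have "rho t \<in> orbit G \<phi> t" unfolding rho_def by (rule someI[of _ t]) (rule orbit_refl[OF t])
  moreover obtain g where "g \<in> carrier G" "rho t = \<phi> g t" using orbit_mem[OF t calculation] by blast
  moreover then have "rho t \<in> E" using act_closed t by simp
  ultimately show ?thesis by simp
qed

lemma orbit_eq: "t \<in> E \<Longrightarrow> g \<in> carrier G \<Longrightarrow> orbit G \<phi> (\<phi> g t) = orbit G \<phi> t"
proof -
  assume t: "t \<in> E" and g: "g \<in> carrier G"
  interpret group G by (rule grpG)
  show ?thesis
  proof
    show "orbit G \<phi> (\<phi> g t) \<subseteq> orbit G \<phi> t"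
    proof
      fix v assume "v \<in> orbit G \<phi> (\<phi> g t)"
      then obtain h where h: "h \<in> carrier G" "v = \<phi> h (\<phi> g t)" unfolding orbit_def by blast
      then have "v = \<phi> (h \<otimes> g) t" using act_comp g t by simp
      then show "v \<in> orbit G \<phi> t" unfolding orbit_def using h g by blast
    qed
  next
    show "orbit G \<phi> t \<subseteq> orbit G \<phi> (\<phi> g t)"
    proof
      fix v assume "v \<in> orbit G \<phi> t"
      then obtain h where h: "h \<in> carrier G" "v = \<phi> h t" unfolding orbit_def by blast
      have "\<phi> (h \<otimes> inv g) (\<phi> g t) = \<phi> h (\<phi> (inv g) (\<phi> g t))" using act_comp h g t act_closed by simp
      also have "\<dots> = v" using act_inv g t h by simp
      finally have "\<phi> (h \<otimes> inv g) (\<phi> g t) = v" .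
      moreover have "h \<otimes> inv g \<in> carrier G" using h g by simp
      ultimately show "v \<in> orbit G \<phi> (\<phi> g t)" unfolding orbit_def by blast
    qed
  qed
qed

lemma rho_eq: "t \<in> E \<Longrightarrow> g \<in> carrier G \<Longrightarrow> rho (\<phi> g t) = rho t"
  unfolding rho_def using orbit_eq by simp

lemma gam_prop: "t \<in> E \<Longrightarrow> gam t \<in> carrier G \<and> \<phi> (gam t) (rho t) = t"
proof -
  assume t: "t \<in> E"
  interpret group G by (rule grpG)
  obtain g where g: "g \<in> carrier G" "rho t = \<phi> g t" using orbit_mem[OF t] rho_prop[OF t] by blast
  have "inv g \<in> carrier G \<and> \<phi> (inv g) (rho t) = t" using g act_inv t by simp
  then show ?thesis unfolding gam_def by (rule someI)
qed

lemma stab_sub: "stabilizer G \<phi> u \<subseteq> carrier G"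
  by (rule stabilizer_subset)

lemma M_cbdd: "t \<in> E \<Longrightarrow> cbdd (carrier G) \<Phi> \<Longrightarrow> cbdd (stabilizer G \<phi> (rho t)) (\<lambda>h. \<Phi> (gam t \<otimes> h))"
proof -
  assume t: "t \<in> E" and P: "cbdd (carrier G) \<Phi>"
  interpret group G by (rule grpG)
  obtain B where B: "\<forall>x\<in>carrier G. norm (\<Phi> x) \<le> B" using P unfolding cbdd_def by blast
  have "\<forall>h\<in>stabilizer G \<phi> (rho t). norm (\<Phi> (gam t \<otimes> h)) \<le> B"
    using B gam_prop[OF t] stab_sub by blast
  then show ?thesis unfolding cbdd_def by blast
qed

lemma rm: "t \<in> E \<Longrightarrow> rmean (stabilizer G \<phi> (rho t)) (mm (rho t))"
  using goodm_mm rho_prop unfolding goodm_def by blast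

lemma M_cong: "t \<in> E \<Longrightarrow> cbdd (carrier G) \<Phi> \<Longrightarrow> (\<And>x. x \<in> carrier G \<Longrightarrow> \<Phi> x = \<Psi> x) \<Longrightarrow> M t \<Phi> = M t \<Psi>"
proof -
  assume t: "t \<in> E" and P: "cbdd (carrier G) \<Phi>" and e: "\<And>x. x \<in> carrier G \<Longrightarrow> \<Phi> x = \<Psi> x"
  interpret group G by (rule grpG)
  show ?thesis unfolding M_def
    by (rule cmean_cong[OF rm[OF t] M_cbdd[OF t P]]) (use e gam_prop[OF t] stab_sub in blast)
qed

lemma M_add: "t \<in> E \<Longrightarrow> cbdd (carrier G) \<Phi> \<Longrightarrow> cbdd (carrier G) \<Psi> \<Longrightarrow> M t (\<lambda>x. \<Phi> x + \<Psi> x) = M t \<Phi> + M t \<Psi>"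
  unfolding M_def by (rule cmean_add[OF rm M_cbdd M_cbdd])

lemma M_scale: "t \<in> E \<Longrightarrow> cbdd (carrier G) \<Phi> \<Longrightarrow> M t (\<lambda>x. c * \<Phi> x) = c * M t \<Phi>"
  unfolding M_def by (rule cmean_scale[OF rm M_cbdd])

lemma M_const: "t \<in> E \<Longrightarrow> M t (\<lambda>x. c) = c"
  unfolding M_def by (rule cmean_const[OF rm])

lemma M_bound: "t \<in> E \<Longrightarrow> (\<And>x. x \<in> carrier G \<Longrightarrow> norm (\<Phi> x) \<le> B) \<Longrightarrow> norm (M t \<Phi>) \<le> 2 * B"
proof -
  assume t: "t \<in> E" and B: "\<And>x. x \<in> carrier G \<Longrightarrow> norm (\<Phi> x) \<le> B"
  interpret group G by (rule grpG)
  show ?thesis unfolding M_def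
    by (rule cmean_bound[OF rm[OF t]]) (use B gam_prop[OF t] stab_sub in blast)
qed

lemma M_sum: assumes t: "t \<in> E" shows "finite A \<Longrightarrow> (\<And>i. i \<in> A \<Longrightarrow> cbdd (carrier G) (\<Phi> i)) \<Longrightarrow>
   M t (\<lambda>x. \<Sum>i\<in>A. \<Phi> i x) = (\<Sum>i\<in>A. M t (\<Phi> i))"
proof (induction A rule: finite_induct)
  case empty
  then show ?case using M_const[OF t, of 0] by simp
next
  case (insert a A)
  have "M t (\<lambda>x. \<Sum>i\<in>insert a A. \<Phi> i x) = M t (\<lambda>x. \<Phi> a x + (\<Sum>i\<in>A. \<Phi> i x))"
    using insert.hyps by (simp add: sum.insert)
  also have "\<dots> = M t (\<Phi> a) + M t (\<lambda>x. \<Sum>i\<in>A. \<Phi> i x)"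
    by (rule M_add[OF t]) (use insert in \<open>auto intro: cbdd_sum\<close>)
  finally show ?case using insert by (simp add: sum.insert)
qed

lemma M_equiv:
  assumes g: "g \<in> carrier G" and t: "t \<in> E" and P: "cbdd (carrier G) \<Phi>"
  shows "M (\<phi> g t) \<Phi> = M t (\<lambda>x. \<Phi> (g \<otimes> x))"
proof -
  interpret group G by (rule grpG)
  let ?u = "rho t"
  have gt: "\<phi> g t \<in> E" using act_closed g t by simp
  have ru: "rho (\<phi> g t) = ?u" using rho_eq t g by simp
  have uE: "?u \<in> E" using rho_prop[OF t] by simp
  define g1 where "g1 = gam (\<phi> g t)"
  define g0 where "g0 = gam t"
  have g1: "g1 \<in> carrier G" "\<phi> g1 ?u = \<phi> g t" using gam_prop[OF gt] ru by (auto simp: g1_def)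
  have g0: "g0 \<in> carrier G" "\<phi> g0 ?u = t" using gam_prop[OF t] by (auto simp: g0_def)
  define k where "k = inv g1 \<otimes> (g \<otimes> g0)"
  have kG: "k \<in> carrier G" using g1 g0 g by (simp add: k_def)
  have "\<phi> k ?u = \<phi> (inv g1) (\<phi> g (\<phi> g0 ?u))"
    using act_comp g1 g0 g uE act_closed by (simp add: k_def)
  also have "\<dots> = \<phi> (inv g1) (\<phi> g1 ?u)" using g0 g1 by simp
  also have "\<dots> = ?u" using act_inv[OF g1(1) uE] .
  finally have kS: "k \<in> stabilizer G \<phi> ?u" using kG unfolding stabilizer_def by simp
  have inv: "\<forall>f. bounded_on (stabilizer G \<phi> ?u) f \<longrightarrow> mm ?u (\<lambda>x. f (k \<otimes> x)) = mm ?u f"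
    using goodm_mm[OF uE] kS unfolding goodm_def by blast
  have Pb: "cbdd (stabilizer G \<phi> ?u) (\<lambda>h. \<Phi> (g1 \<otimes> h))"
    using M_cbdd[OF gt P] ru by (simp add: g1_def)
  have "M t (\<lambda>x. \<Phi> (g \<otimes> x)) = cmean (mm ?u) (\<lambda>h. \<Phi> (g \<otimes> (g0 \<otimes> h)))"
    by (simp add: M_def g0_def)
  also have "\<dots> = cmean (mm ?u) (\<lambda>h. (\<lambda>h. \<Phi> (g1 \<otimes> h)) (k \<otimes> h))"
  proof (rule sym, rule cmean_cong[OF rm[OF t]])
    show "cbdd (stabilizer G \<phi> ?u) (\<lambda>h. (\<lambda>h. \<Phi> (g1 \<otimes> h)) (k \<otimes> h))"
    proof -
      obtain B where B: "\<forall>x\<in>carrier G. norm (\<Phi> x) \<le> B" using P unfolding cbdd_def by blast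
      have "\<forall>h\<in>stabilizer G \<phi> ?u. norm (\<Phi> (g1 \<otimes> (k \<otimes> h))) \<le> B"
        using B g1 kG stab_sub by blast
      then show ?thesis unfolding cbdd_def by auto
    qed
    fix h assume h: "h \<in> stabilizer G \<phi> ?u"
    then have hG: "h \<in> carrier G" using stab_sub by blast
    have X: "g \<otimes> (g0 \<otimes> h) \<in> carrier G" using g0 g hG by simp
    have "g1 \<otimes> (k \<otimes> h) = g1 \<otimes> (inv g1 \<otimes> (g \<otimes> (g0 \<otimes> h)))"
      using g1 g0 g hG by (simp add: k_def m_assoc)
    also have "\<dots> = (g1 \<otimes> inv g1) \<otimes> (g \<otimes> (g0 \<otimes> h))"
      by (rule m_assoc[symmetric]) (use g1 X in simp_all)
    also have "\<dots> = g \<otimes> (g0 \<otimes> h)" using g1 X by simp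
    finally show "(\<lambda>h. \<Phi> (g1 \<otimes> h)) (k \<otimes> h) = \<Phi> (g \<otimes> (g0 \<otimes> h))" by simp
  qed
  also have "\<dots> = cmean (mm ?u) (\<lambda>h. \<Phi> (g1 \<otimes> h))"
    by (rule cmean_inv[OF rm[OF t] _ Pb]) (use inv in simp)
  also have "\<dots> = M (\<phi> g t) \<Phi>" by (simp add: M_def g1_def ru)
  finally show ?thesis by simp
qed

end

lemma Rfun:
  assumes B: "\<And>t. t \<in> I \<Longrightarrow> norm (r t) \<le> B" and B0: "B \<ge> 0"
  shows "\<And>\<xi>. \<xi> \<in> l1 I \<Longrightarrow> (\<lambda>t. \<xi> t * r t) summable_on I"
    and "(\<lambda>\<xi>. infsum (\<lambda>t. \<xi> t * r t) I) \<in> dual I"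
    and "\<And>\<xi>. \<xi> \<in> l1 I \<Longrightarrow> norm (infsum (\<lambda>t. \<xi> t * r t) I) \<le> B * l1norm I \<xi>"
    and "\<And>u. u \<in> I \<Longrightarrow> infsum (\<lambda>t. dl u t * r t) I = r u"
proof -
  have absm: "(\<lambda>t. norm (\<xi> t * r t)) summable_on I" if x: "\<xi> \<in> l1 I" for \<xi>
  proof (rule summable_on_comparison_test[of "\<lambda>t. norm (\<xi> t) * B"])
    show "(\<lambda>t. norm (\<xi> t) * B) summable_on I" by (rule summable_on_cmult_left[OF l1_normsum[OF x]])
  qed (auto simp: norm_mult intro: mult_left_mono B)
  show sm: "\<And>\<xi>. \<xi> \<in> l1 I \<Longrightarrow> (\<lambda>t. \<xi> t * r t) summable_on I"
    using absm summable_on_iff_abs_summable_on_complex by blast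
  have bnd: "norm (infsum (\<lambda>t. \<xi> t * r t) I) \<le> B * l1norm I \<xi>" if x: "\<xi> \<in> l1 I" for \<xi>
  proof -
    have "norm (infsum (\<lambda>t. \<xi> t * r t) I) \<le> infsum (\<lambda>t. norm (\<xi> t * r t)) I"
      by (rule norm_infsum_bound[OF absm[OF x]])
    also have "\<dots> \<le> infsum (\<lambda>t. norm (\<xi> t) * B) I"
      by (rule infsum_mono[OF absm[OF x] summable_on_cmult_left[OF l1_normsum[OF x]]])
         (auto simp: norm_mult intro: mult_left_mono B)
    also have "\<dots> = l1norm I \<xi> * B" unfolding l1norm_def by (rule infsum_cmult_left) (use l1_normsum[OF x] in auto)
    finally show ?thesis by (simp add: mult.commute)
  qed
  show "\<And>\<xi>. \<xi> \<in> l1 I \<Longrightarrow> norm (infsum (\<lambda>t. \<xi> t * r t) I) \<le> B * l1norm I \<xi>" by (rule bnd)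
  show "(\<lambda>\<xi>. infsum (\<lambda>t. \<xi> t * r t) I) \<in> dual I"
  proof (rule dualI[where C=B])
    fix \<xi> \<eta> assume x: "\<xi> \<in> l1 I" "\<eta> \<in> l1 I"
    have "infsum (\<lambda>t. (\<xi> t + \<eta> t) * r t) I = infsum (\<lambda>t. \<xi> t * r t + \<eta> t * r t) I"
      by (simp add: distrib_right)
    also have "\<dots> = infsum (\<lambda>t. \<xi> t * r t) I + infsum (\<lambda>t. \<eta> t * r t) I"
      by (rule infsum_add[OF sm[OF x(1)] sm[OF x(2)]])
    finally show "infsum (\<lambda>t. (\<xi> t + \<eta> t) * r t) I = infsum (\<lambda>t. \<xi> t * r t) I + infsum (\<lambda>t. \<eta> t * r t) I" .
  next
    fix c \<xi> assume x: "\<xi> \<in> l1 I"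
    have "infsum (\<lambda>t. (c * \<xi> t) * r t) I = infsum (\<lambda>t. c * (\<xi> t * r t)) I"
      by (simp add: mult.assoc)
    also have "\<dots> = c * infsum (\<lambda>t. \<xi> t * r t) I" by (rule infsum_cmult_right[OF sm[OF x]])
    finally show "infsum (\<lambda>t. (c * \<xi> t) * r t) I = c * infsum (\<lambda>t. \<xi> t * r t) I" .
  qed (rule bnd)
  fix u assume u: "u \<in> I"
  have "infsum (\<lambda>t. dl u t * r t) I = infsum (\<lambda>t. if t = u then r u else 0) I"
    by (rule infsum_cong) (simp add: dl_def)
  also have "\<dots> = r u" using u by (simp add: infsum_single)
  finally show "infsum (\<lambda>t. dl u t * r t) I = r u" .
qed

lemma Rlin:
  assumes "\<xi> \<in> l1 I" "\<And>t. t \<in> I \<Longrightarrow> norm (r1 t) \<le> B1" "B1 \<ge> 0" "\<And>t. t \<in> I \<Longrightarrow> norm (r2 t) \<le> B2" "B2 \<ge> 0"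
  shows "infsum (\<lambda>t. \<xi> t * (r1 t + r2 t)) I = infsum (\<lambda>t. \<xi> t * r1 t) I + infsum (\<lambda>t. \<xi> t * r2 t) I"
proof -
  have "infsum (\<lambda>t. \<xi> t * (r1 t + r2 t)) I = infsum (\<lambda>t. \<xi> t * r1 t + \<xi> t * r2 t) I"
    by (simp add: distrib_left)
  also have "\<dots> = infsum (\<lambda>t. \<xi> t * r1 t) I + infsum (\<lambda>t. \<xi> t * r2 t) I"
    by (rule infsum_add[OF Rfun(1)[OF assms(2,3,1)] Rfun(1)[OF assms(4,5,1)]])
  finally show ?thesis .
qed

lemma Rscale:
  assumes "\<xi> \<in> l1 I" "\<And>t. t \<in> I \<Longrightarrow> norm (r1 t) \<le> B1" "B1 \<ge> 0"
  shows "infsum (\<lambda>t. \<xi> t * (c * r1 t)) I = c * infsum (\<lambda>t. \<xi> t * r1 t) I"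
proof -
  have "infsum (\<lambda>t. \<xi> t * (c * r1 t)) I = infsum (\<lambda>t. c * (\<xi> t * r1 t)) I"
    by (simp add: mult.left_commute)
  also have "\<dots> = c * infsum (\<lambda>t. \<xi> t * r1 t) I"
    by (rule infsum_cmult_right[OF Rfun(1)[OF assms(2,3,1)]])
  finally show ?thesis .
qed

lemma merge_app: "Suc i < length as \<Longrightarrow> merge_at G i (as @ [d]) = merge_at G i as @ [d]"
  by (simp add: merge_at_def nth_append)

lemma merge_last: "length as = Suc m \<Longrightarrow> merge_at G m (as @ [d]) = take m as @ [conv G (as ! m) d]"
  by (simp add: merge_at_def nth_append)

lemma length_merge: "Suc i < length as \<Longrightarrow> length (merge_at G i as) = length as - 1"
  by (simp add: merge_at_def)

lemma upd_app: "i < length bs \<Longrightarrow> (bs @ [d])[i := v] = bs[i := v] @ [d]"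
  by (simp add: list_update_append)

lemma upd_last: "(bs @ [d])[length bs := v] = bs @ [v]"
  by simp

lemma set_upd: "set bs \<subseteq> A \<Longrightarrow> v \<in> A \<Longrightarrow> set (bs[i := v]) \<subseteq> A"
  by (meson insert_subset order_trans set_update_subset_insert)

lemma prod_nonneg: "0 \<le> (\<Prod>a\<leftarrow>as. l1norm I a)"
  by (rule prod_list_nonneg) (auto simp: l1norm_nonneg)

context group_action
begin

lemma set_merge: "set as \<subseteq> l1 (carrier G) \<Longrightarrow> Suc i < length as \<Longrightarrow> set (merge_at G i as) \<subseteq> l1 (carrier G)"
proof -
  assume s: "set as \<subseteq> l1 (carrier G)" and i: "Suc i < length as"
  have "conv G (as ! i) (as ! Suc i) \<in> l1 (carrier G)"
    using s i by (intro conv_l1) (auto dest: nth_mem)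
  moreover have "set (take i as) \<subseteq> l1 (carrier G)" using s by (meson order_trans set_take_subset)
  moreover have "set (drop (Suc (Suc i)) as) \<subseteq> l1 (carrier G)" using s by (meson order_trans set_drop_subset)
  ultimately show ?thesis by (simp add: merge_at_def)
qed

end

locale cocyc = amen_action G E \<phi> for G (structure) and E and \<phi> +
  fixes n :: nat and T
  assumes n1: "n \<ge> 1" and cT: "cochain G E n T"
    and cyc: "\<forall>as. length as = Suc n \<longrightarrow> set as \<subseteq> l1 (carrier G) \<longrightarrow> (\<forall>\<xi>\<in>l1 E. cobound G E \<phi> n T as \<xi> = 0)"
begin

abbreviation "Pr as \<equiv> (\<Prod>a\<leftarrow>as. l1norm (carrier G) a)"

lemma T_dual: assumes "length as = n" "set as \<subseteq> l1 (carrier G)" shows "T as \<in> dual E"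
  using cT[unfolded cochain_def, THEN conjunct1, rule_format, OF assms] .

lemma T_add: assumes "length as = n" "set as \<subseteq> l1 (carrier G)" "i < n" "x \<in> l1 (carrier G)" "y \<in> l1 (carrier G)"
  "\<xi> \<in> l1 E" shows "T (as[i := (\<lambda>g. x g + y g)]) \<xi> = T (as[i := x]) \<xi> + T (as[i := y]) \<xi>"
  using cT[unfolded cochain_def, THEN conjunct2, THEN conjunct1, rule_format, OF assms] .

lemma T_scale: assumes "length as = n" "set as \<subseteq> l1 (carrier G)" "i < n" "x \<in> l1 (carrier G)"
  "\<xi> \<in> l1 E" shows "T (as[i := (\<lambda>g. c * x g)]) \<xi> = c * T (as[i := x]) \<xi>"
  using cT[unfolded cochain_def, THEN conjunct2, THEN conjunct2, THEN conjunct1, rule_format, OF assms] .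

lemma CT_ex: "\<exists>C\<ge>0. \<forall>as. length as = n \<longrightarrow> set as \<subseteq> l1 (carrier G) \<longrightarrow>
        (\<forall>\<xi>\<in>l1 E. norm (T as \<xi>) \<le> C * Pr as * l1norm E \<xi>)"
proof -
  obtain C where C: "\<forall>as. length as = n \<longrightarrow> set as \<subseteq> l1 (carrier G) \<longrightarrow>
        (\<forall>\<xi>\<in>l1 E. norm (T as \<xi>) \<le> C * Pr as * l1norm E \<xi>)"
    using cT[unfolded cochain_def, THEN conjunct2, THEN conjunct2, THEN conjunct2] by (elim exE)
  have "\<forall>as. length as = n \<longrightarrow> set as \<subseteq> l1 (carrier G) \<longrightarrow>
        (\<forall>\<xi>\<in>l1 E. norm (T as \<xi>) \<le> max C 0 * Pr as * l1norm E \<xi>)"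
  proof (intro allI impI ballI)
    fix as \<xi> assume a: "length as = n" "set as \<subseteq> l1 (carrier G)" "\<xi> \<in> l1 E"
    have "C * Pr as * l1norm E \<xi> \<le> max C 0 * Pr as * l1norm E \<xi>"
      by (intro mult_right_mono) (simp_all add: prod_nonneg l1norm_nonneg)
    moreover have "norm (T as \<xi>) \<le> C * Pr as * l1norm E \<xi>" using C[rule_format, OF a] .
    ultimately show "norm (T as \<xi>) \<le> max C 0 * Pr as * l1norm E \<xi>" by linarith
  qed
  moreover have "max C 0 \<ge> 0" by simp
  ultimately show ?thesis by blast
qed

definition CT where "CT = (SOME C. C \<ge> 0 \<and> (\<forall>as. length as = n \<longrightarrow> set as \<subseteq> l1 (carrier G) \<longrightarrow>
        (\<forall>\<xi>\<in>l1 E. norm (T as \<xi>) \<le> C * Pr as * l1norm E \<xi>)))"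

lemma CT: "CT \<ge> 0" "length as = n \<Longrightarrow> set as \<subseteq> l1 (carrier G) \<Longrightarrow> \<xi> \<in> l1 E \<Longrightarrow> norm (T as \<xi>) \<le> CT * Pr as * l1norm E \<xi>"
proof -
  note h = someI_ex[OF CT_ex, folded CT_def]
  show "CT \<ge> 0" using h by (rule conjunct1)
  show "length as = n \<Longrightarrow> set as \<subseteq> l1 (carrier G) \<Longrightarrow> \<xi> \<in> l1 E \<Longrightarrow> norm (T as \<xi>) \<le> CT * Pr as * l1norm E \<xi>"
    using h[THEN conjunct2, rule_format] by simp
qed

definition Phi where "Phi bs t x = T (bs @ [dl x]) (dl (\<phi> (inv x) t))"
definition W where "W bs t = M t (Phi bs t)"
definition r where "r bs t = (-1) ^ n * W bs t"
definition R where "R bs \<xi> = infsum (\<lambda>t. \<xi> t * r bs t) E"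

lemma Phi_bound:
  assumes bs: "length bs = n - 1" "set bs \<subseteq> l1 (carrier G)" and t: "t \<in> E" and x: "x \<in> carrier G"
  shows "norm (Phi bs t x) \<le> CT * Pr bs"
proof -
  interpret group G by (rule grpG)
  have l: "length (bs @ [dl x]) = n" using bs n1 by simp
  have s: "set (bs @ [dl x]) \<subseteq> l1 (carrier G)" using bs l1_dl[OF x] by simp
  have v: "\<phi> (inv x) t \<in> E" using act_closed x t by simp
  have "norm (Phi bs t x) \<le> CT * Pr (bs @ [dl x]) * l1norm E (dl (\<phi> (inv x) t))"
    unfolding Phi_def by (rule CT(2)[OF l s l1_dl[OF v]])
  also have "\<dots> = CT * Pr bs" using l1norm_dl[OF x] l1norm_dl[OF v] by simp
  finally show ?thesis .
qed

lemma Phi_cbdd: "length bs = n - 1 \<Longrightarrow> set bs \<subseteq> l1 (carrier G) \<Longrightarrow> t \<in> E \<Longrightarrow> cbdd (carrier G) (Phi bs t)"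
  by (rule cbdd_bound) (rule Phi_bound)

lemma r_bound:
  assumes bs: "length bs = n - 1" "set bs \<subseteq> l1 (carrier G)" and t: "t \<in> E"
  shows "norm (r bs t) \<le> 2 * (CT * Pr bs)"
proof -
  have "norm (W bs t) \<le> 2 * (CT * Pr bs)"
    unfolding W_def by (rule M_bound[OF t]) (rule Phi_bound[OF bs t])
  then show ?thesis by (simp add: r_def norm_mult norm_power)
qed

lemma B0: "0 \<le> 2 * (CT * Pr bs)"
proof -
  have "0 \<le> CT * Pr bs" by (rule mult_nonneg_nonneg[OF CT(1) prod_nonneg])
  then show ?thesis by simp
qed

lemma R_facts:
  assumes bs: "length bs = n - 1" "set bs \<subseteq> l1 (carrier G)"
  shows "R bs \<in> dual E" "\<And>u. u \<in> E \<Longrightarrow> R bs (dl u) = r bs u"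
    "\<And>\<xi>. \<xi> \<in> l1 E \<Longrightarrow> norm (R bs \<xi>) \<le> 2 * CT * Pr bs * l1norm E \<xi>"
proof -
  note rf = Rfun[of E "r bs" "2 * (CT * Pr bs)", OF r_bound[OF bs] B0]
  show "R bs \<in> dual E" using rf(2) unfolding R_def[abs_def] by simp
  show "\<And>u. u \<in> E \<Longrightarrow> R bs (dl u) = r bs u" using rf(4) unfolding R_def by simp
  show "\<And>\<xi>. \<xi> \<in> l1 E \<Longrightarrow> norm (R bs \<xi>) \<le> 2 * CT * Pr bs * l1norm E \<xi>"
    using rf(3) unfolding R_def by (simp add: mult.assoc)
qed

lemma R_cochain: "cochain G E (n - 1) R"
  unfolding cochain_def
proof (intro conjI allI impI ballI)
  fix as assume "length as = n - 1" "set as \<subseteq> l1 (carrier G)"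
  then show "R as \<in> dual E" by (rule R_facts(1))
next
  fix as i x y \<xi> assume as: "length as = n - 1" "set as \<subseteq> l1 (carrier G)" and i: "i < n - 1"
    and x: "x \<in> l1 (carrier G)" and y: "y \<in> l1 (carrier G)" and xi: "\<xi> \<in> l1 E"
  interpret group G by (rule grpG)
  have lx: "length (as[i := x]) = n - 1" "set (as[i := x]) \<subseteq> l1 (carrier G)" using as set_upd[OF as(2) x] by auto
  have ly: "length (as[i := y]) = n - 1" "set (as[i := y]) \<subseteq> l1 (carrier G)" using as set_upd[OF as(2) y] by auto
  have rr: "r (as[i := (\<lambda>g. x g + y g)]) t = r (as[i := x]) t + r (as[i := y]) t" if t: "t \<in> E" for t
  proof -
    have "W (as[i := (\<lambda>g. x g + y g)]) t = M t (\<lambda>z. Phi (as[i := x]) t z + Phi (as[i := y]) t z)"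
      unfolding W_def
    proof (rule M_cong[OF t])
      show "cbdd (carrier G) (Phi (as[i := (\<lambda>g. x g + y g)]) t)"
        by (rule Phi_cbdd[OF _ _ t]) (use as set_upd[OF as(2) l1_add[OF x y]] in auto)
      fix z assume z: "z \<in> carrier G"
      have l: "length (as @ [dl z]) = n" "set (as @ [dl z]) \<subseteq> l1 (carrier G)" "i < n"
        using as n1 i l1_dl[OF z] by auto
      show "Phi (as[i := (\<lambda>g. x g + y g)]) t z = Phi (as[i := x]) t z + Phi (as[i := y]) t z"
        unfolding Phi_def using T_add[OF l x y l1_dl[OF act_closed[OF inv_closed[OF z] t]]] as i
        by (simp add: upd_app)
    qed
    also have "\<dots> = W (as[i := x]) t + W (as[i := y]) t"
      unfolding W_def by (rule M_add[OF t Phi_cbdd[OF lx t] Phi_cbdd[OF ly t]])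
    finally show ?thesis by (simp add: r_def distrib_left)
  qed
  have "R (as[i := (\<lambda>g. x g + y g)]) \<xi> = infsum (\<lambda>t. \<xi> t * (r (as[i := x]) t + r (as[i := y]) t)) E"
    unfolding R_def by (rule infsum_cong) (simp add: rr)
  also have "\<dots> = R (as[i := x]) \<xi> + R (as[i := y]) \<xi>"
    unfolding R_def by (rule Rlin[OF xi r_bound[OF lx] B0 r_bound[OF ly] B0])
  finally show "R (as[i := (\<lambda>g. x g + y g)]) \<xi> = R (as[i := x]) \<xi> + R (as[i := y]) \<xi>" .
next
  fix as i c x \<xi> assume as: "length as = n - 1" "set as \<subseteq> l1 (carrier G)" and i: "i < n - 1"
    and x: "x \<in> l1 (carrier G)" and xi: "\<xi> \<in> l1 E"
  interpret group G by (rule grpG)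
  have lx: "length (as[i := x]) = n - 1" "set (as[i := x]) \<subseteq> l1 (carrier G)" using as set_upd[OF as(2) x] by auto
  have rr: "r (as[i := (\<lambda>g. c * x g)]) t = c * r (as[i := x]) t" if t: "t \<in> E" for t
  proof -
    have "W (as[i := (\<lambda>g. c * x g)]) t = M t (\<lambda>z. c * Phi (as[i := x]) t z)"
      unfolding W_def
    proof (rule M_cong[OF t])
      show "cbdd (carrier G) (Phi (as[i := (\<lambda>g. c * x g)]) t)"
        by (rule Phi_cbdd[OF _ _ t]) (use as set_upd[OF as(2) l1_scale[OF x]] in auto)
      fix z assume z: "z \<in> carrier G"
      have l: "length (as @ [dl z]) = n" "set (as @ [dl z]) \<subseteq> l1 (carrier G)" "i < n"
        using as n1 i l1_dl[OF z] by auto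
      show "Phi (as[i := (\<lambda>g. c * x g)]) t z = c * Phi (as[i := x]) t z"
        unfolding Phi_def using T_scale[OF l x l1_dl[OF act_closed[OF inv_closed[OF z] t]]] as i
        by (simp add: upd_app)
    qed
    also have "\<dots> = c * W (as[i := x]) t"
      unfolding W_def by (rule M_scale[OF t Phi_cbdd[OF lx t]])
    finally show ?thesis by (simp add: r_def mult.left_commute)
  qed
  have "R (as[i := (\<lambda>g. c * x g)]) \<xi> = infsum (\<lambda>t. \<xi> t * (c * r (as[i := x]) t)) E"
    unfolding R_def by (rule infsum_cong) (simp add: rr)
  also have "\<dots> = c * R (as[i := x]) \<xi>"
    unfolding R_def by (rule Rscale[OF xi r_bound[OF lx] B0])
  finally show "R (as[i := (\<lambda>g. c * x g)]) \<xi> = c * R (as[i := x]) \<xi>" .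
next
  show "\<exists>C. \<forall>as. length as = n - 1 \<longrightarrow> set as \<subseteq> l1 (carrier G) \<longrightarrow>
        (\<forall>\<xi>\<in>l1 E. norm (R as \<xi>) \<le> C * Pr as * l1norm E \<xi>)"
    by (rule exI[of _ "2 * CT"]) (use R_facts(3) in auto)
qed

end

context cocyc
begin

definition eps where "eps a = infsum a (carrier G)"

lemma nSuc: "n = Suc (n - 1)" using n1 by simp

lemma list_facts:
  assumes as: "length as = n" "set as \<subseteq> l1 (carrier G)"
  shows "length (tl as) = n - 1" "set (tl as) \<subseteq> l1 (carrier G)"
    "length (take (n - 1) as) = n - 1" "set (take (n - 1) as) \<subseteq> l1 (carrier G)"
    "\<And>i. i < n - 1 \<Longrightarrow> length (merge_at G i as) = n - 1"
    "\<And>i. i < n - 1 \<Longrightarrow> set (merge_at G i as) \<subseteq> l1 (carrier G)"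
    "as ! 0 \<in> l1 (carrier G)" "as ! (n - 1) \<in> l1 (carrier G)"
proof -
  show "length (tl as) = n - 1" using as by simp
  show "set (tl as) \<subseteq> l1 (carrier G)" using as(2) by (cases as) auto
  show "length (take (n - 1) as) = n - 1" using as by simp
  show "set (take (n - 1) as) \<subseteq> l1 (carrier G)" using as(2) by (meson order_trans set_take_subset)
  show "\<And>i. i < n - 1 \<Longrightarrow> length (merge_at G i as) = n - 1"
  proof -
    fix i assume "i < n - 1" then have "Suc i < length as" using as by simp
    then show "length (merge_at G i as) = n - 1" using length_merge[of i as G] as(1) by simp
  qed
  show "\<And>i. i < n - 1 \<Longrightarrow> set (merge_at G i as) \<subseteq> l1 (carrier G)"
  proof -
    fix i assume "i < n - 1" then have "Suc i < length as" using as by simp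
    then show "set (merge_at G i as) \<subseteq> l1 (carrier G)" by (rule set_merge[OF as(2)])
  qed
  have "as ! 0 \<in> set as" using as n1 by (intro nth_mem) simp
  then show "as ! 0 \<in> l1 (carrier G)" using as(2) by auto
  have "as ! (n - 1) \<in> set as" using as n1 by (intro nth_mem) simp
  then show "as ! (n - 1) \<in> l1 (carrier G)" using as(2) by auto
qed

definition Fq where "Fq bs u a = M u (\<lambda>x. T (bs @ [conv G a (dl x)]) (dl (\<phi> (inv x) u)))"

lemma Q_bound:
  assumes bs: "length bs = n - 1" "set bs \<subseteq> l1 (carrier G)" and u: "u \<in> E" and a: "a \<in> l1 (carrier G)"
    and x: "x \<in> carrier G"
  shows "norm (T (bs @ [conv G a (dl x)]) (dl (\<phi> (inv x) u))) \<le> CT * Pr bs * l1norm (carrier G) a"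
proof -
  interpret group G by (rule grpG)
  have l: "length (bs @ [conv G a (dl x)]) = n" using bs n1 by simp
  have s: "set (bs @ [conv G a (dl x)]) \<subseteq> l1 (carrier G)" using bs conv_dl_l1(1)[OF a x] by simp
  have v: "\<phi> (inv x) u \<in> E" using act_closed x u by simp
  have "norm (T (bs @ [conv G a (dl x)]) (dl (\<phi> (inv x) u))) \<le> CT * Pr (bs @ [conv G a (dl x)]) * l1norm E (dl (\<phi> (inv x) u))"
    by (rule CT(2)[OF l s l1_dl[OF v]])
  also have "\<dots> = CT * Pr bs * l1norm (carrier G) a" using conv_dl_l1(2)[OF a x] l1norm_dl[OF v] by simp
  finally show ?thesis .
qed

lemma Q_cbdd:
  assumes bs: "length bs = n - 1" "set bs \<subseteq> l1 (carrier G)" and u: "u \<in> E" and a: "a \<in> l1 (carrier G)"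
  shows "cbdd (carrier G) (\<lambda>x. T (bs @ [conv G a (dl x)]) (dl (\<phi> (inv x) u)))"
  by (rule cbdd_bound) (rule Q_bound[OF bs u a])

lemma Fq_dual:
  assumes bs: "length bs = n - 1" "set bs \<subseteq> l1 (carrier G)" and u: "u \<in> E"
  shows "Fq bs u \<in> dual (carrier G)"
proof (rule dualI[where C="2 * (CT * Pr bs)"])
  interpret group G by (rule grpG)
  have lm: "length bs < n" using bs n1 by simp
  fix a b assume a: "a \<in> l1 (carrier G)" and b: "b \<in> l1 (carrier G)"
  have "Fq bs u (\<lambda>s. a s + b s) = M u (\<lambda>x. T (bs @ [conv G a (dl x)]) (dl (\<phi> (inv x) u)) + T (bs @ [conv G b (dl x)]) (dl (\<phi> (inv x) u)))"
    unfolding Fq_def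
  proof (rule M_cong[OF u Q_cbdd[OF bs u l1_add[OF a b]]])
    fix x assume x: "x \<in> carrier G"
    have ca: "conv G a (dl x) \<in> l1 (carrier G)" by (rule conv_dl_l1(1)[OF a x])
    have cb: "conv G b (dl x) \<in> l1 (carrier G)" by (rule conv_dl_l1(1)[OF b x])
    have e: "conv G (\<lambda>s. a s + b s) (dl x) = (\<lambda>g. conv G a (dl x) g + conv G b (dl x) g)"
      using x by (auto simp: conv_dl)
    have l: "length (bs @ [conv G a (dl x)]) = n" "set (bs @ [conv G a (dl x)]) \<subseteq> l1 (carrier G)"
      using bs n1 ca by auto
    have v: "dl (\<phi> (inv x) u) \<in> l1 E" by (rule l1_dl[OF act_closed[OF inv_closed[OF x] u]])
    have "T ((bs @ [conv G a (dl x)])[length bs := (\<lambda>g. conv G a (dl x) g + conv G b (dl x) g)]) (dl (\<phi> (inv x) u))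
      = T ((bs @ [conv G a (dl x)])[length bs := conv G a (dl x)]) (dl (\<phi> (inv x) u))
        + T ((bs @ [conv G a (dl x)])[length bs := conv G b (dl x)]) (dl (\<phi> (inv x) u))"
      by (rule T_add[OF l lm ca cb v])
    then show "T (bs @ [conv G (\<lambda>s. a s + b s) (dl x)]) (dl (\<phi> (inv x) u)) =
      T (bs @ [conv G a (dl x)]) (dl (\<phi> (inv x) u)) + T (bs @ [conv G b (dl x)]) (dl (\<phi> (inv x) u))"
      unfolding e upd_last .
  qed
  also have "\<dots> = Fq bs u a + Fq bs u b"
    unfolding Fq_def by (rule M_add[OF u Q_cbdd[OF bs u a] Q_cbdd[OF bs u b]])
  finally show "Fq bs u (\<lambda>s. a s + b s) = Fq bs u a + Fq bs u b" .
next
  interpret group G by (rule grpG)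
  have lm: "length bs < n" using bs n1 by simp
  fix c a assume a: "a \<in> l1 (carrier G)"
  have "Fq bs u (\<lambda>s. c * a s) = M u (\<lambda>x. c * T (bs @ [conv G a (dl x)]) (dl (\<phi> (inv x) u)))"
    unfolding Fq_def
  proof (rule M_cong[OF u Q_cbdd[OF bs u l1_scale[OF a]]])
    fix x assume x: "x \<in> carrier G"
    have ca: "conv G a (dl x) \<in> l1 (carrier G)" by (rule conv_dl_l1(1)[OF a x])
    have e: "conv G (\<lambda>s. c * a s) (dl x) = (\<lambda>g. c * conv G a (dl x) g)"
      using x by (auto simp: conv_dl)
    have l: "length (bs @ [conv G a (dl x)]) = n" "set (bs @ [conv G a (dl x)]) \<subseteq> l1 (carrier G)"
      using bs n1 ca by auto
    have v: "dl (\<phi> (inv x) u) \<in> l1 E" by (rule l1_dl[OF act_closed[OF inv_closed[OF x] u]])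
    have "T ((bs @ [conv G a (dl x)])[length bs := (\<lambda>g. c * conv G a (dl x) g)]) (dl (\<phi> (inv x) u))
      = c * T ((bs @ [conv G a (dl x)])[length bs := conv G a (dl x)]) (dl (\<phi> (inv x) u))"
      by (rule T_scale[OF l lm ca v])
    then show "T (bs @ [conv G (\<lambda>s. c * a s) (dl x)]) (dl (\<phi> (inv x) u)) =
      c * T (bs @ [conv G a (dl x)]) (dl (\<phi> (inv x) u))"
      unfolding e upd_last .
  qed
  also have "\<dots> = c * Fq bs u a"
    unfolding Fq_def by (rule M_scale[OF u Q_cbdd[OF bs u a]])
  finally show "Fq bs u (\<lambda>s. c * a s) = c * Fq bs u a" .
next
  fix a assume a: "a \<in> l1 (carrier G)"
  have "norm (Fq bs u a) \<le> 2 * (CT * Pr bs * l1norm (carrier G) a)"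
    unfolding Fq_def by (rule M_bound[OF u]) (rule Q_bound[OF bs u a])
  then show "norm (Fq bs u a) \<le> 2 * (CT * Pr bs) * l1norm (carrier G) a" by (simp add: mult.assoc)
qed

lemma Fq_dl:
  assumes bs: "length bs = n - 1" "set bs \<subseteq> l1 (carrier G)" and u: "u \<in> E" and g: "g \<in> carrier G"
  shows "Fq bs u (dl g) = W bs (\<phi> g u)"
proof -
  interpret group G by (rule grpG)
  have gu: "\<phi> g u \<in> E" using act_closed g u by simp
  have "Fq bs u (dl g) = M u (\<lambda>x. Phi bs (\<phi> g u) (g \<otimes> x))"
    unfolding Fq_def
  proof (rule M_cong[OF u Q_cbdd[OF bs u l1_dl[OF g]]])
    fix x assume x: "x \<in> carrier G"
    have "\<phi> (inv (g \<otimes> x)) (\<phi> g u) = \<phi> (inv x) (\<phi> (inv g) (\<phi> g u))"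
      using g x u act_comp act_closed by (simp add: inv_mult_group)
    also have "\<dots> = \<phi> (inv x) u" using act_inv g u by simp
    finally have e: "\<phi> (inv (g \<otimes> x)) (\<phi> g u) = \<phi> (inv x) u" .
    show "T (bs @ [conv G (dl g) (dl x)]) (dl (\<phi> (inv x) u)) = Phi bs (\<phi> g u) (g \<otimes> x)"
      unfolding Phi_def conv_dl_dl[OF g x] e ..
  qed
  also have "\<dots> = M (\<phi> g u) (Phi bs (\<phi> g u))"
    by (rule M_equiv[symmetric, OF g u Phi_cbdd[OF bs gu]])
  finally show ?thesis unfolding W_def .
qed

lemma Fq_sum:
  assumes bs: "length bs = n - 1" "set bs \<subseteq> l1 (carrier G)" and u: "u \<in> E" and a: "a \<in> l1 (carrier G)"
  shows "((\<lambda>g. a g * W bs (\<phi> g u)) has_sum Fq bs u a) (carrier G)"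
proof -
  have "((\<lambda>g. a g * Fq bs u (dl g)) has_sum Fq bs u a) (carrier G)"
    by (rule DL[OF Fq_dual[OF bs u] a])
  moreover have "((\<lambda>g. a g * Fq bs u (dl g)) has_sum Fq bs u a) (carrier G) \<longleftrightarrow>
      ((\<lambda>g. a g * W bs (\<phi> g u)) has_sum Fq bs u a) (carrier G)"
    by (rule has_sum_cong) (simp add: Fq_dl[OF bs u])
  ultimately show ?thesis by simp
qed

end




lemma alg_final:
  fixes p e W S F Tv :: complex
  assumes "p * p = 1" "e * W + S + p * F + (- p) * Tv = 0"
  shows "e * (p * W) + p * S + p * (p * F) = Tv"
proof -
  have "p * (e * W + S + p * F + (- p) * Tv) = 0" using assms(2) by simp
  then have "e * (p * W) + p * S + p * (p * F) - (p * p) * Tv = 0" by (simp add: algebra_simps)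
  then show ?thesis using assms(1) by simp
qed

context cocyc
begin

lemma pp: "((-1::complex) ^ n) * (-1) ^ n = 1"
  by (simp add: power_mult_distrib[symmetric])

lemma cob_expand:
  assumes as: "length as = n" "set as \<subseteq> l1 (carrier G)" and xi: "\<xi> \<in> l1 E"
  shows "cobound G E \<phi> (n - 1) R as \<xi> = eps (as ! 0) * R (tl as) \<xi>
     + (\<Sum>i<n - 1. (-1) ^ (i + 1) * R (merge_at G i as) \<xi>)
     + (-1) ^ n * R (take (n - 1) as) (lact G E \<phi> (as ! (n - 1)) \<xi>)"
proof -
  note lf = list_facts[OF as]
  have "dlact G (as ! 0) (R (tl as)) \<xi> = eps (as ! 0) * R (tl as) \<xi>"
    unfolding dlact_def ract_def eps_def by (rule dual_scale[OF R_facts(1)[OF lf(1,2)] xi])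
  moreover have "n - 1 + 1 = n" using n1 by simp
  ultimately show ?thesis unfolding cobound_def dract_def by simp
qed

lemma cob_dual:
  assumes as: "length as = n" "set as \<subseteq> l1 (carrier G)"
  shows "cobound G E \<phi> (n - 1) R as \<in> dual E"
proof -
  note lf = list_facts[OF as]
  have h1: "(\<lambda>\<xi>. eps (as ! 0) * R (tl as) \<xi>) \<in> dual E"
    by (rule dual_cmul[OF R_facts(1)[OF lf(1,2)]])
  have h2: "(\<lambda>\<xi>. \<Sum>i<n - 1. (-1) ^ (i + 1) * R (merge_at G i as) \<xi>) \<in> dual E"
  proof (rule dual_sum)
    fix i assume "i \<in> {..<n - 1}"
    then have i: "i < n - 1" by simp
    show "(\<lambda>\<xi>. (-1) ^ (i + 1) * R (merge_at G i as) \<xi>) \<in> dual E"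
      by (rule dual_cmul[OF R_facts(1)[OF lf(5)[OF i] lf(6)[OF i]]])
  qed simp
  have h3: "(\<lambda>\<xi>. (-1) ^ n * R (take (n - 1) as) (lact G E \<phi> (as ! (n - 1)) \<xi>)) \<in> dual E"
    by (rule dual_cmul[OF dual_lact_xi[OF R_facts(1)[OF lf(3,4)] lf(8)]])
  have h: "(\<lambda>\<xi>. eps (as ! 0) * R (tl as) \<xi>
     + (\<Sum>i<n - 1. (-1) ^ (i + 1) * R (merge_at G i as) \<xi>)
     + (-1) ^ n * R (take (n - 1) as) (lact G E \<phi> (as ! (n - 1)) \<xi>)) \<in> dual E"
    using dual_plus[OF dual_plus[OF h1 h2] h3] by simp
  show ?thesis by (rule dual_cong[OF h]) (rule cob_expand[OF as])
qed

lemma cocycle_point: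
  assumes as: "length as = n" "set as \<subseteq> l1 (carrier G)" and u: "u \<in> E" and x: "x \<in> carrier G"
  shows "eps (as ! 0) * Phi (tl as) u x + (\<Sum>i<n - 1. (-1) ^ (i + 1) * Phi (merge_at G i as) u x)
     + (-1) ^ n * T (take (n - 1) as @ [conv G (as ! (n - 1)) (dl x)]) (dl (\<phi> (inv x) u))
     + (- ((-1) ^ n)) * T as (dl u) = 0"
proof -
  interpret group G by (rule grpG)
  note lf = list_facts[OF as]
  obtain m where nm: "n = Suc m" using n1 by (metis Suc_pred' less_le_trans zero_less_one)
  define v where "v = \<phi> (inv x) u"
  have v: "v \<in> E" using act_closed x u by (simp add: v_def)
  have xv: "\<phi> x v = u" using act_inv2 x u by (simp add: v_def)
  let ?bs = "as @ [dl x]"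
  have l: "length ?bs = Suc n" "set ?bs \<subseteq> l1 (carrier G)" using as l1_dl[OF x] by auto
  have z: "cobound G E \<phi> n T ?bs (dl v) = 0" using cyc l l1_dl[OF v] by blast
  have ne: "as \<noteq> []" using as n1 by auto
  have t1: "dlact G (?bs ! 0) (T (tl ?bs)) (dl v) = eps (as ! 0) * Phi (tl as) u x"
  proof -
    have "?bs ! 0 = as ! 0" using ne by (simp add: nth_append)
    moreover have "tl ?bs = tl as @ [dl x]" using ne by simp
    moreover have "T (tl as @ [dl x]) (\<lambda>s. eps (as ! 0) * dl v s) = eps (as ! 0) * T (tl as @ [dl x]) (dl v)"
      by (rule dual_scale[OF T_dual l1_dl[OF v]]) (use lf(1,2) l1_dl[OF x] n1 in auto)
    ultimately show ?thesis unfolding dlact_def ract_def eps_def[symmetric] Phi_def v_def by simp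
  qed
  have t2: "(\<Sum>i<n. (-1) ^ (i + 1) * T (merge_at G i ?bs) (dl v))
    = (\<Sum>i<n - 1. (-1) ^ (i + 1) * Phi (merge_at G i as) u x)
      + (-1) ^ n * T (take (n - 1) as @ [conv G (as ! (n - 1)) (dl x)]) (dl (\<phi> (inv x) u))"
  proof -
    have "(\<Sum>i<n. (-1) ^ (i + 1) * T (merge_at G i ?bs) (dl v))
       = (\<Sum>i<m. (-1) ^ (i + 1) * T (merge_at G i ?bs) (dl v)) + (-1) ^ (m + 1) * T (merge_at G m ?bs) (dl v)"
      unfolding nm by (rule sum.lessThan_Suc)
    moreover have "(\<Sum>i<m. (-1) ^ (i + 1) * T (merge_at G i ?bs) (dl v)) = (\<Sum>i<m. (-1) ^ (i + 1) * Phi (merge_at G i as) u x)"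
    proof (rule sum.cong)
      fix i assume "i \<in> {..<m}"
      then have "Suc i < length as" using as nm by simp
      then show "(-1) ^ (i + 1) * T (merge_at G i ?bs) (dl v) = (-1) ^ (i + 1) * Phi (merge_at G i as) u x"
        by (simp add: merge_app Phi_def v_def)
    qed simp
    moreover have "merge_at G m ?bs = take m as @ [conv G (as ! m) (dl x)]"
      by (rule merge_last) (use as nm in simp)
    ultimately show ?thesis by (simp add: v_def nm)
  qed
  have t3: "dract G E \<phi> (T (take n ?bs)) (?bs ! n) (dl v) = T as (dl u)"
  proof -
    have "?bs ! n = dl x" "take n ?bs = as" using as(1) by (auto simp: nth_append)
    then show ?thesis by (simp add: dract_def lact_dl_dl[OF x v] xv)
  qed
  have "(-1::complex) ^ (n + 1) = - ((-1) ^ n)" by simp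
  then show ?thesis using z t1 t2 t3 unfolding cobound_def by (simp add: add.assoc)
qed


lemma cob_dl:
  assumes as: "length as = n" "set as \<subseteq> l1 (carrier G)" and u: "u \<in> E"
  shows "cobound G E \<phi> (n - 1) R as (dl u) = T as (dl u)"
proof -
  interpret group G by (rule grpG)
  note lf = list_facts[OF as]
  define p :: complex where "p = (-1) ^ n"
  define a0 where "a0 = as ! 0"
  define an where "an = as ! (n - 1)"
  define bs where "bs = take (n - 1) as"
  have a0: "a0 \<in> l1 (carrier G)" using lf(7) by (simp add: a0_def)
  have an: "an \<in> l1 (carrier G)" using lf(8) by (simp add: an_def)
  have bs: "length bs = n - 1" "set bs \<subseteq> l1 (carrier G)" using lf(3,4) by (simp_all add: bs_def)
  have tl: "length (tl as) = n - 1" "set (tl as) \<subseteq> l1 (carrier G)" using lf(1,2) by simp_all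
  have hs: "((\<lambda>g. an g * r bs (\<phi> g u)) has_sum R bs (lact G E \<phi> an (dl u))) (carrier G)"
  proof -
    have "((\<lambda>g. an g * R bs (lact G E \<phi> (dl g) (dl u))) has_sum R bs (lact G E \<phi> an (dl u))) (carrier G)"
      by (rule DL[OF dual_lact_a[OF R_facts(1)[OF bs] l1_dl[OF u]] an])
    moreover have "((\<lambda>g. an g * R bs (lact G E \<phi> (dl g) (dl u))) has_sum R bs (lact G E \<phi> an (dl u))) (carrier G)
       \<longleftrightarrow> ((\<lambda>g. an g * r bs (\<phi> g u)) has_sum R bs (lact G E \<phi> an (dl u))) (carrier G)"
    proof (rule has_sum_cong)
      fix g assume g: "g \<in> carrier G"
      show "an g * R bs (lact G E \<phi> (dl g) (dl u)) = an g * r bs (\<phi> g u)"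
        unfolding lact_dl_dl[OF g u] R_facts(2)[OF bs act_closed[OF g u]] ..
    qed
    ultimately show ?thesis by simp
  qed
  have fs: "((\<lambda>g. an g * W bs (\<phi> g u)) has_sum Fq bs u an) (carrier G)" by (rule Fq_sum[OF bs u an])
  have "((\<lambda>g. p * (an g * W bs (\<phi> g u))) has_sum (p * Fq bs u an)) (carrier G)"
    by (rule has_sum_cmult_right[OF fs])
  then have "((\<lambda>g. an g * r bs (\<phi> g u)) has_sum (p * Fq bs u an)) (carrier G)"
    by (simp add: r_def p_def mult.left_commute)
  then have Rl: "R bs (lact G E \<phi> an (dl u)) = p * Fq bs u an" using has_sum_unique[OF hs] by simp
  have Ls: "(\<Sum>i<n - 1. (-1) ^ (i + 1) * R (merge_at G i as) (dl u)) = p * (\<Sum>i<n - 1. (-1) ^ (i + 1) * W (merge_at G i as) u)"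
    unfolding sum_distrib_left
  proof (rule sum.cong)
    fix i assume "i \<in> {..<n - 1}"
    then have i: "i < n - 1" by simp
    show "(-1) ^ (i + 1) * R (merge_at G i as) (dl u) = p * ((-1) ^ (i + 1) * W (merge_at G i as) u)"
      unfolding R_facts(2)[OF lf(5)[OF i] lf(6)[OF i] u] r_def p_def by (simp add: mult_ac)
  qed simp
  have L: "cobound G E \<phi> (n - 1) R as (dl u) = eps a0 * (p * W (tl as) u)
     + p * (\<Sum>i<n - 1. (-1) ^ (i + 1) * W (merge_at G i as) u) + p * R bs (lact G E \<phi> an (dl u))"
    unfolding cob_expand[OF as l1_dl[OF u]] R_facts(2)[OF tl u] Ls
    by (simp add: a0_def r_def p_def an_def bs_def)
  define Z where "Z = (\<lambda>x. eps a0 * Phi (tl as) u x + (\<Sum>i<n - 1. (-1) ^ (i + 1) * Phi (merge_at G i as) u x)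
     + p * T (bs @ [conv G an (dl x)]) (dl (\<phi> (inv x) u)) + (- p) * T as (dl u))"
  have Z0: "\<And>x. x \<in> carrier G \<Longrightarrow> Z x = 0"
    using cocycle_point[OF as u] by (simp add: Z_def a0_def an_def bs_def p_def)
  have cA: "cbdd (carrier G) (\<lambda>x. eps a0 * Phi (tl as) u x)" by (rule cbdd_scale[OF Phi_cbdd[OF tl u]])
  have cBi: "\<And>i. i \<in> {..<n - 1} \<Longrightarrow> cbdd (carrier G) (\<lambda>x. (-1) ^ (i + 1) * Phi (merge_at G i as) u x)"
    by (rule cbdd_scale[OF Phi_cbdd[OF lf(5) lf(6) u]]) simp_all
  have cB: "cbdd (carrier G) (\<lambda>x. \<Sum>i<n - 1. (-1) ^ (i + 1) * Phi (merge_at G i as) u x)"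
    by (rule cbdd_sum[OF _ cBi]) simp
  have cC: "cbdd (carrier G) (\<lambda>x. p * T (bs @ [conv G an (dl x)]) (dl (\<phi> (inv x) u)))"
    by (rule cbdd_scale[OF Q_cbdd[OF bs u an]])
  have cD: "cbdd (carrier G) (\<lambda>x. (- p) * T as (dl u))" by (rule cbdd_bound[where B="norm ((- p) * T as (dl u))"]) simp
  have cAB: "cbdd (carrier G) (\<lambda>x. eps a0 * Phi (tl as) u x + (\<Sum>i<n - 1. (-1) ^ (i + 1) * Phi (merge_at G i as) u x))"
    by (rule cbdd_add[OF cA cB])
  have cABC: "cbdd (carrier G) (\<lambda>x. eps a0 * Phi (tl as) u x + (\<Sum>i<n - 1. (-1) ^ (i + 1) * Phi (merge_at G i as) u x)
     + p * T (bs @ [conv G an (dl x)]) (dl (\<phi> (inv x) u)))"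
    by (rule cbdd_add[OF cAB cC])
  have cZ: "cbdd (carrier G) Z" unfolding Z_def by (rule cbdd_add[OF cABC cD])
  have "M u Z = M u (\<lambda>x. 0)" by (rule M_cong[OF u cZ Z0])
  also have "\<dots> = 0" by (rule M_const[OF u])
  finally have MZ: "M u Z = 0" .
  have "M u Z = M u (\<lambda>x. eps a0 * Phi (tl as) u x + (\<Sum>i<n - 1. (-1) ^ (i + 1) * Phi (merge_at G i as) u x)
     + p * T (bs @ [conv G an (dl x)]) (dl (\<phi> (inv x) u))) + M u (\<lambda>x. (- p) * T as (dl u))"
    unfolding Z_def by (rule M_add[OF u cABC cD])
  also have "M u (\<lambda>x. (- p) * T as (dl u)) = (- p) * T as (dl u)" by (rule M_const[OF u])
  also have "M u (\<lambda>x. eps a0 * Phi (tl as) u x + (\<Sum>i<n - 1. (-1) ^ (i + 1) * Phi (merge_at G i as) u x)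
     + p * T (bs @ [conv G an (dl x)]) (dl (\<phi> (inv x) u)))
     = M u (\<lambda>x. eps a0 * Phi (tl as) u x + (\<Sum>i<n - 1. (-1) ^ (i + 1) * Phi (merge_at G i as) u x))
       + M u (\<lambda>x. p * T (bs @ [conv G an (dl x)]) (dl (\<phi> (inv x) u)))"
    by (rule M_add[OF u cAB cC])
  also have "M u (\<lambda>x. p * T (bs @ [conv G an (dl x)]) (dl (\<phi> (inv x) u))) = p * Fq bs u an"
    unfolding Fq_def by (rule M_scale[OF u Q_cbdd[OF bs u an]])
  also have "M u (\<lambda>x. eps a0 * Phi (tl as) u x + (\<Sum>i<n - 1. (-1) ^ (i + 1) * Phi (merge_at G i as) u x))
     = M u (\<lambda>x. eps a0 * Phi (tl as) u x) + M u (\<lambda>x. \<Sum>i<n - 1. (-1) ^ (i + 1) * Phi (merge_at G i as) u x)"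
    by (rule M_add[OF u cA cB])
  also have "M u (\<lambda>x. eps a0 * Phi (tl as) u x) = eps a0 * W (tl as) u"
    unfolding W_def by (rule M_scale[OF u Phi_cbdd[OF tl u]])
  also have "M u (\<lambda>x. \<Sum>i<n - 1. (-1) ^ (i + 1) * Phi (merge_at G i as) u x)
     = (\<Sum>i<n - 1. M u (\<lambda>x. (-1) ^ (i + 1) * Phi (merge_at G i as) u x))"
    by (rule M_sum[OF u _ cBi]) simp
  also have "\<dots> = (\<Sum>i<n - 1. (-1) ^ (i + 1) * W (merge_at G i as) u)"
  proof (rule sum.cong)
    fix i assume "i \<in> {..<n - 1}"
    then have i: "i < n - 1" by simp
    show "M u (\<lambda>x. (-1) ^ (i + 1) * Phi (merge_at G i as) u x) = (-1) ^ (i + 1) * W (merge_at G i as) u"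
      unfolding W_def by (rule M_scale[OF u Phi_cbdd[OF lf(5)[OF i] lf(6)[OF i] u]])
  qed simp
  finally have eq: "eps a0 * W (tl as) u + (\<Sum>i<n - 1. (-1) ^ (i + 1) * W (merge_at G i as) u)
     + p * Fq bs u an + (- p) * T as (dl u) = 0" using MZ by simp
  have "p * p = 1" using pp by (simp add: p_def)
  from alg_final[OF this eq] show ?thesis unfolding L Rl .
qed

lemma cob_eq:
  assumes as: "length as = n" "set as \<subseteq> l1 (carrier G)" and xi: "\<xi> \<in> l1 E"
  shows "cobound G E \<phi> (n - 1) R as \<xi> = T as \<xi>"
  by (rule DL_eq[OF cob_dual[OF as] T_dual[OF as] cob_dl[OF as] xi])

end

theorem corollary4p2:
  fixes G :: "('g, 'b) monoid_scheme" and S :: "'s set" and \<phi> :: "'g \<Rightarrow> 's \<Rightarrow> 's"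
  assumes "group_action G S \<phi>"
    and "\<forall>s\<in>S. amenable_group (G\<lparr>carrier := stabilizer G \<phi> s\<rparr>)"
    and "n \<ge> 1"
  shows "hochschild_vanishes G S \<phi> n"
  unfolding hochschild_vanishes_def
proof (intro allI impI)
  fix T assume cT: "cochain G S n T"
    and cyc: "\<forall>as. length as = Suc n \<longrightarrow> set as \<subseteq> l1 (carrier G) \<longrightarrow> (\<forall>\<xi>\<in>l1 S. cobound G S \<phi> n T as \<xi> = 0)"
  interpret c: cocyc G S \<phi> n T
  proof -
    interpret group_action G S \<phi> by (rule assms(1))
    show "cocyc G S \<phi> n T"
      by (intro cocyc.intro amen_action.intro amen_action_axioms.intro cocyc_axioms.intro assms cT cyc)
  qed
  show "\<exists>R. cochain G S (n - 1) R \<and>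
          (\<forall>as. length as = n \<longrightarrow> set as \<subseteq> l1 (carrier G) \<longrightarrow>
             (\<forall>\<xi>\<in>l1 S. cobound G S \<phi> (n - 1) R as \<xi> = T as \<xi>))"
    by (intro exI[of _ c.R] conjI c.R_cochain allI impI ballI c.cob_eq)
qed


end
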